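(* Suppose the Cameron–Martin spaces $H^*=\mathcal C^{1/2}(L_2)$ and $\widetilde H^*=\widetilde{\mathcal C}^{1/2}(L_2)$ are norm equivalent Hilbert spaces (Assumption I), and let $\{\mathcal H_n\}_{n\in\mathbb N}$ be a sequence of subspaces of $\mathcal H$ with $\mathcal H_n=\mathbb R\oplus\mathrm{span}\{y^0_{n1},\dots,y^0_{nn}\}$, $y^0_{nj}\in\mathcal H^0$, for every $n$. Then, for every $h\in\mathcal H$, the best linear predictors $\{h_n\}$ based on $\{\mathcal H_n\}$ and $\mu$ are $\mu$-consistent (i.e. $\mathbb E[(h_n-h)^2]\to0$) if and only if the best linear predictors $\{\widetilde h_n\}$ based on $\{\mathcal H_n\}$ and $\widetilde\mu$ are $\widetilde\mu$-consistent (i.e. $\widetilde{\mathbb E}[(\widetilde h_n-h)^2]\to0$). In particular, $\mathcal S^\mu_{\mathrm{adm}}=\mathcal S^{\widetilde\mu}_{\mathrm{adm}}$.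
   Context: Let $(\mathcal X,d_{\mathcal X})$ be a connected, compact metric space of infinite cardinality, $\nu_{\mathcal X}$ a strictly positive finite Borel measure, $L_2=L_2(\mathcal X,\nu_{\mathcal X})$. Let $\varrho,\widetilde\varrho$ be continuous, strictly positive definite covariance functions, $m,\widetilde m\in L_2$, $\mathcal C,\widetilde{\mathcal C}$ the integral operators on $L_2$ with kernels $\varrho,\widetilde\varrho$, and $\mu=N(m,\mathcal C)$, $\widetilde\mu=N(\widetilde m,\widetilde{\mathcal C})$ the induced Gaussian measures on $L_2$. Cameron–Martin norm: $\|u\|_{H^*}=\|\mathcal C^{-1/2}u\|_{L_2}$, analogously for $\widetilde H^*$. Let $Z$ have law $\mu$, $Z^0=Z-m$; $\mathbb E$ is expectation under $\mu$, $\widetilde{\mathbb E}$ the expectation of the same linear functionals when the field has law $\widetilde\mu$. $\mathcal H^0$: closure in $L_2(\Omega,\mathbb P)$ of finite combinations $\sum_j\alpha_jZ^0(x_j)$ with inner product $\mathrm{Cov}$; $\mathcal H=\mathbb R\oplus\mathcal H^0$. Best linear predictor $h_n\in\mathcal H_n$ of $h$: $\mathbb E[(h_n-h)g]=0$ for all $g\in\mathcal H_n$; $\widetilde h_n$ analogously with $\widetilde{\mathbb E}$. $\mathcal S^\mu_{\mathrm{adm}}$ (resp. $\mathcal S^{\widetilde\mu}_{\mathrm{adm}}$): sequences of such subspaces with $y^0_{n1},\dots,y^0_{nn}$ linearly independent for which the $\mu$-predictors are $\mu$-consistent (resp. the $\widetilde\mu$-predictors are $\widetilde\mu$-consistent)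 for every $h\in\mathcal H$. *)

theory Defs
  imports "HOL-Analysis.Analysis"
begin

definition is_L2 :: "'a measure \<Rightarrow> ('a \<Rightarrow> real) \<Rightarrow> bool" where
  "is_L2 \<nu> u \<longleftrightarrow> u \<in> borel_measurable \<nu> \<and> integrable \<nu> (\<lambda>x. (u x)\<^sup>2)"

definition cov_op :: "'a measure \<Rightarrow> ('a \<Rightarrow> 'a \<Rightarrow> real) \<Rightarrow> ('a \<Rightarrow> real) \<Rightarrow> 'a \<Rightarrow> real" where
  "cov_op \<nu> k v = (\<lambda>x. \<integral>y. k x y * v y \<partial>\<nu>)"

text \<open>Cameron--Martin norm of the Gaussian measure with covariance operator C
  (value infinity outside the Cameron--Martin space):
  norm(u) = sup { <u,v> : v in L2, <C v, v> \<le> 1 }, which equals the norm of C^(-1/2) u.\<close>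
definition cm_norm :: "'a measure \<Rightarrow> ('a \<Rightarrow> 'a \<Rightarrow> real) \<Rightarrow> ('a \<Rightarrow> real) \<Rightarrow> ereal" where
  "cm_norm \<nu> k u = Sup {ereal (\<integral>x. u x * v x \<partial>\<nu>) | v.
      is_L2 \<nu> v \<and> (\<integral>x. cov_op \<nu> k v x * v x \<partial>\<nu>) \<le> 1}"

definition cm_space :: "'a measure \<Rightarrow> ('a \<Rightarrow> 'a \<Rightarrow> real) \<Rightarrow> ('a \<Rightarrow> real) set" where
  "cm_space \<nu> k = {u. is_L2 \<nu> u \<and> cm_norm \<nu> k u < \<infinity>}"

definition cm_norm_equivalent :: "'a measure \<Rightarrow> ('a \<Rightarrow> 'a \<Rightarrow> real) \<Rightarrow> ('a \<Rightarrow> 'a \<Rightarrow> real) \<Rightarrow> bool" where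
  "cm_norm_equivalent \<nu> k1 k2 \<longleftrightarrow> cm_space \<nu> k1 = cm_space \<nu> k2 \<and>
     (\<exists>c>0. \<forall>u\<in>cm_space \<nu> k1.
        ereal c * cm_norm \<nu> k1 u \<le> cm_norm \<nu> k2 u \<and>
        cm_norm \<nu> k2 u \<le> ereal (1 / c) * cm_norm \<nu> k1 u)"

definition fsupp :: "('a \<Rightarrow> real) \<Rightarrow> 'a set" where
  "fsupp \<alpha> = {x. \<alpha> x \<noteq> 0}"

text \<open>Covariance of sum_x alpha(x) Z0(x) and sum_y beta(y) Z0(y) for finitely supported alpha, beta.\<close>
definition bil :: "('a \<Rightarrow> 'a \<Rightarrow> real) \<Rightarrow> ('a \<Rightarrow> real) \<Rightarrow> ('a \<Rightarrow> real) \<Rightarrow> real" where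
  "bil k \<alpha> \<beta> = (\<Sum>x\<in>fsupp \<alpha>. \<Sum>y\<in>fsupp \<beta>. \<alpha> x * \<beta> y * k x y)"

definition strictly_pos_def_kernel :: "('a \<Rightarrow> 'a \<Rightarrow> real) \<Rightarrow> bool" where
  "strictly_pos_def_kernel k \<longleftrightarrow> (\<forall>x y. k x y = k y x) \<and>
     (\<forall>\<alpha>. finite (fsupp \<alpha>) \<and> fsupp \<alpha> \<noteq> {} \<longrightarrow> bil k \<alpha> \<alpha> > 0)"

text \<open>An element of H0 is represented by a sequence of finite combinations
  sum_x a_j(x) Z0(x) that is Cauchy in L2(P) (i.e. w.r.t. the covariance k);
  it stands for the L2-limit of that sequence.\<close>
definition H0 :: "('a \<Rightarrow> 'a \<Rightarrow> real) \<Rightarrow> (nat \<Rightarrow> 'a \<Rightarrow> real) set" where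
  "H0 k = {a. (\<forall>j. finite (fsupp (a j))) \<and>
     (\<forall>e>0. \<exists>N. \<forall>i\<ge>N. \<forall>j\<ge>N. bil k (\<lambda>x. a i x - a j x) (\<lambda>x. a i x - a j x) < e)}"

definition covar :: "('a \<Rightarrow> 'a \<Rightarrow> real) \<Rightarrow> (nat \<Rightarrow> 'a \<Rightarrow> real) \<Rightarrow> (nat \<Rightarrow> 'a \<Rightarrow> real) \<Rightarrow> real" where
  "covar k a b = lim (\<lambda>j. bil k (a j) (b j))"

text \<open>H = R (+) H0: a pair (c, a) stands for c + (the element of H0 represented by a).\<close>
definition Hsp :: "('a \<Rightarrow> 'a \<Rightarrow> real) \<Rightarrow> (real \<times> (nat \<Rightarrow> 'a \<Rightarrow> real)) set" where
  "Hsp k = UNIV \<times> H0 k"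

text \<open>Second moment E[h g] under the Gaussian measure with covariance kernel k
  (the H0-components are centred).\<close>
definition mom2 :: "('a \<Rightarrow> 'a \<Rightarrow> real) \<Rightarrow> real \<times> (nat \<Rightarrow> 'a \<Rightarrow> real) \<Rightarrow> real \<times> (nat \<Rightarrow> 'a \<Rightarrow> real) \<Rightarrow> real" where
  "mom2 k h g = fst h * fst g + covar k (snd h) (snd g)"

definition hdiff :: "real \<times> (nat \<Rightarrow> 'a \<Rightarrow> real) \<Rightarrow> real \<times> (nat \<Rightarrow> 'a \<Rightarrow> real) \<Rightarrow> real \<times> (nat \<Rightarrow> 'a \<Rightarrow> real)" where
  "hdiff h g = (fst h - fst g, \<lambda>j x. snd h j x - snd g j x)"

text \<open>H_n = R (+) span{y_n1, ..., y_nn}, where y n i represents y^0_ni in H0.\<close>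
definition comb :: "(nat \<Rightarrow> nat \<Rightarrow> nat \<Rightarrow> 'a \<Rightarrow> real) \<Rightarrow> nat \<Rightarrow> (nat \<Rightarrow> real) \<Rightarrow> nat \<Rightarrow> 'a \<Rightarrow> real" where
  "comb y n \<beta> = (\<lambda>j x. \<Sum>i\<in>{1..n}. \<beta> i * y n i j x)"

definition Hn :: "(nat \<Rightarrow> nat \<Rightarrow> nat \<Rightarrow> 'a \<Rightarrow> real) \<Rightarrow> nat \<Rightarrow> (real \<times> (nat \<Rightarrow> 'a \<Rightarrow> real)) set" where
  "Hn y n = {(c, comb y n \<beta>) | c \<beta>. True}"

definition is_blp :: "('a \<Rightarrow> 'a \<Rightarrow> real) \<Rightarrow> (nat \<Rightarrow> nat \<Rightarrow> nat \<Rightarrow> 'a \<Rightarrow> real) \<Rightarrow> nat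
     \<Rightarrow> real \<times> (nat \<Rightarrow> 'a \<Rightarrow> real) \<Rightarrow> real \<times> (nat \<Rightarrow> 'a \<Rightarrow> real) \<Rightarrow> bool" where
  "is_blp k y n h p \<longleftrightarrow> p \<in> Hn y n \<and> (\<forall>g\<in>Hn y n. mom2 k (hdiff p h) g = 0)"

definition blp_consistent :: "('a \<Rightarrow> 'a \<Rightarrow> real) \<Rightarrow> (nat \<Rightarrow> nat \<Rightarrow> nat \<Rightarrow> 'a \<Rightarrow> real)
     \<Rightarrow> real \<times> (nat \<Rightarrow> 'a \<Rightarrow> real) \<Rightarrow> bool" where
  "blp_consistent k y h \<longleftrightarrow> (\<forall>p. (\<forall>n. is_blp k y n h (p n)) \<longrightarrow>
      (\<lambda>n. mom2 k (hdiff (p n) h) (hdiff (p n) h)) \<longlonglongrightarrow> 0)"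

definition lin_indep_n :: "('a \<Rightarrow> 'a \<Rightarrow> real) \<Rightarrow> (nat \<Rightarrow> nat \<Rightarrow> nat \<Rightarrow> 'a \<Rightarrow> real) \<Rightarrow> nat \<Rightarrow> bool" where
  "lin_indep_n k y n \<longleftrightarrow> (\<forall>\<beta>. covar k (comb y n \<beta>) (comb y n \<beta>) = 0 \<longrightarrow> (\<forall>i\<in>{1..n}. \<beta> i = 0))"

definition S_adm :: "('a \<Rightarrow> 'a \<Rightarrow> real) \<Rightarrow> (nat \<Rightarrow> nat \<Rightarrow> nat \<Rightarrow> 'a \<Rightarrow> real) set" where
  "S_adm k = {y. (\<forall>n. \<forall>i\<in>{1..n}. y n i \<in> H0 k) \<and> (\<forall>n. lin_indep_n k y n) \<and>
                 (\<forall>h\<in>Hsp k. blp_consistent k y h)}"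

end

theory Submission
  imports Defs "HOL-Analysis.Analysis"
begin
lemma bil_superset:
  assumes S: "finite S" "fsupp a \<subseteq> S" "fsupp b \<subseteq> S"
  shows "bil k a b = (\<Sum>x\<in>S. \<Sum>y\<in>S. a x * b y * k x y)"
proof -
  have fa: "finite (fsupp a)" "finite (fsupp b)" using S finite_subset by auto
  have "bil k a b = (\<Sum>x\<in>fsupp a. \<Sum>y\<in>S. a x * b y * k x y)"
    unfolding bil_def
    by (rule sum.cong[OF refl], rule sum.mono_neutral_left) (use S in \<open>auto simp: fsupp_def\<close>)
  also have "\<dots> = (\<Sum>x\<in>S. \<Sum>y\<in>S. a x * b y * k x y)"
    by (rule sum.mono_neutral_left) (use S in \<open>auto simp: fsupp_def\<close>)
  finally show ?thesis .
qed

lemma bil_nonneg: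
  assumes "strictly_pos_def_kernel k" "finite (fsupp a)"
  shows "0 \<le> bil k a a"
proof (cases "fsupp a = {}")
  case True then show ?thesis by (simp add: bil_def)
next
  case False then show ?thesis using assms by (auto simp: strictly_pos_def_kernel_def less_imp_le)
qed

lemma dsum_nonneg:
  assumes "strictly_pos_def_kernel k" "finite S"
  shows "0 \<le> (\<Sum>x\<in>S. \<Sum>y\<in>S. V x * V y * k x y)"
proof -
  define a where "a = (\<lambda>x. if x \<in> S then V x else 0)"
  have sub: "fsupp a \<subseteq> S" by (auto simp: a_def fsupp_def)
  then have fin: "finite (fsupp a)" using assms(2) finite_subset by blast
  have "bil k a a = (\<Sum>x\<in>S. \<Sum>y\<in>S. a x * a y * k x y)" by (rule bil_superset[OF assms(2) sub sub])
  also have "\<dots> = (\<Sum>x\<in>S. \<Sum>y\<in>S. V x * V y * k x y)" by (simp add: a_def)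
  finally show ?thesis using bil_nonneg[OF assms(1) fin] by simp
qed

lemma eps_zero:
  fixes a C :: real
  assumes "\<And>e. e > 0 \<Longrightarrow> \<bar>a\<bar> \<le> e * C"
  shows "a = 0"
proof -
  have "\<bar>a\<bar> \<le> 0"
  proof (rule field_le_epsilon)
    fix e :: real assume e: "e > 0"
    show "\<bar>a\<bar> \<le> 0 + e"
    proof (cases "C > 0")
      case True
      have "\<bar>a\<bar> \<le> (e / C) * C" using assms[of "e / C"] e True by simp
      then show ?thesis using True by simp
    next
      case False
      then have "e * C \<le> 0" using e by (simp add: mult_nonneg_nonpos)
      then show ?thesis using assms[OF e] e by linarith
    qed
  qed
  then show ?thesis by simp
qed

lemma pou:
  assumes cpt: "compact (UNIV :: 'a::metric_space set)" and r: "r > 0"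
  shows "\<exists>S \<phi>. finite S \<and> (\<forall>c::'a. continuous_on UNIV (\<phi> c :: 'a \<Rightarrow> real)) \<and> (\<forall>c x. 0 \<le> \<phi> c x \<and> \<phi> c x \<le> 1)
     \<and> (\<forall>x. (\<Sum>c\<in>S. \<phi> c x) = 1) \<and> (\<forall>c x. \<phi> c x \<noteq> 0 \<longrightarrow> dist x c < r)"
proof -
  have cov: "UNIV \<subseteq> (\<Union>c::'a. ball c r)" using r by auto
  obtain S :: "'a set" where S: "finite S" "UNIV \<subseteq> (\<Union>c\<in>S. ball c r)"
    using compactE_image[OF cpt, of "UNIV :: 'a set" "\<lambda>c. ball c r"] cov by auto
  define \<psi> where "\<psi> c x = max 0 (r - dist x c)" for c x :: 'a
  define \<phi> where "\<phi> c x = (if c \<in> S then \<psi> c x / (\<Sum>d\<in>S. \<psi> d x) else 0)" for c x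
  have psi0: "0 \<le> \<psi> c x" for c x by (simp add: \<psi>_def)
  have den: "(\<Sum>d\<in>S. \<psi> d x) > 0" for x
  proof -
    have "x \<in> (\<Union>c\<in>S. ball c r)" using S(2) by blast
    then obtain c where c: "c \<in> S" "dist c x < r" by auto
    have "0 < \<psi> c x" using c by (simp add: \<psi>_def dist_commute)
    also have "\<psi> c x \<le> (\<Sum>d\<in>S. \<psi> d x)" by (rule member_le_sum[OF c(1)]) (use psi0 S in auto)
    finally show ?thesis .
  qed
  have cpsi: "continuous_on UNIV (\<psi> c)" for c
    unfolding \<psi>_def by (intro continuous_intros)
  have P1: "\<forall>c. continuous_on UNIV (\<phi> c)"
  proof
    fix c
    show "continuous_on UNIV (\<phi> c)"
    proof (cases "c \<in> S")
      case True
      have "continuous_on UNIV (\<lambda>x. \<psi> c x / (\<Sum>d\<in>S. \<psi> d x))"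
        by (rule continuous_on_divide) (use cpsi den in \<open>auto intro!: continuous_on_sum simp: less_imp_neq[symmetric]\<close>)
      then show ?thesis using True by (simp add: \<phi>_def)
    qed (simp add: \<phi>_def)
  qed
  have P2: "\<forall>c x. 0 \<le> \<phi> c x \<and> \<phi> c x \<le> 1"
  proof (intro allI conjI)
    fix c x
    show "0 \<le> \<phi> c x" using psi0 den[of x] by (simp add: \<phi>_def)
    show "\<phi> c x \<le> 1"
    proof (cases "c \<in> S")
      case True
      have "\<psi> c x \<le> (\<Sum>d\<in>S. \<psi> d x)" by (rule member_le_sum[OF True]) (use psi0 S in auto)
      then show ?thesis using True den[of x] by (simp add: \<phi>_def)
    qed (simp add: \<phi>_def)
  qed
  have P3: "\<forall>x. (\<Sum>c\<in>S. \<phi> c x) = 1"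
  proof
    fix x
    have "(\<Sum>c\<in>S. \<phi> c x) = (\<Sum>c\<in>S. \<psi> c x / (\<Sum>d\<in>S. \<psi> d x))"
      by (simp add: \<phi>_def)
    also have "\<dots> = (\<Sum>c\<in>S. \<psi> c x) / (\<Sum>d\<in>S. \<psi> d x)"
      by (rule sum_divide_distrib[symmetric])
    also have "\<dots> = 1" using den[of x] by simp
    finally show "(\<Sum>c\<in>S. \<phi> c x) = 1" .
  qed
  have P4: "\<forall>c x. \<phi> c x \<noteq> 0 \<longrightarrow> dist x c < r"
  proof (intro allI impI)
    fix c x assume "\<phi> c x \<noteq> 0"
    then have "\<psi> c x \<noteq> 0" by (auto simp: \<phi>_def split: if_splits)
    then show "dist x c < r" by (auto simp: \<psi>_def max_def split: if_splits)
  qed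
  show ?thesis
    by (rule exI[of _ S], rule exI[of _ \<phi>]) (intro conjI S(1) P1 P2 P3 P4)
qed


definition BB :: "'a measure \<Rightarrow> ('a \<Rightarrow> 'a \<Rightarrow> real) \<Rightarrow> ('a \<Rightarrow> real) \<Rightarrow> ('a \<Rightarrow> real) \<Rightarrow> real" where
  "BB \<nu> K v w = (\<integral>x. cov_op \<nu> K v x * w x \<partial>\<nu>)"

lemma CS_quad:
  fixes A B C :: real
  assumes h: "\<And>t. 0 \<le> A + 2 * t * B + t\<^sup>2 * C"
  shows "B\<^sup>2 \<le> A * C"
proof -
  have A0: "0 \<le> A" using h[of 0] by simp
  show ?thesis
  proof (cases "C = 0")
    case True
    have "B = 0"
    proof (rule ccontr)
      assume B: "B \<noteq> 0"
      have "0 \<le> A + 2 * (-(A + 1) / (2 * B)) * B" using h[of "-(A + 1) / (2 * B)"] True by simp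
      also have "\<dots> = -1" using B by (simp add: field_simps)
      finally show False by simp
    qed
    then show ?thesis using True by simp
  next
    case False
    have C0: "0 \<le> C"
    proof (rule ccontr)
      assume "\<not> 0 \<le> C"
      then have C: "C < 0" by simp
      define t where "t = sqrt ((A + 1) / (- C))"
      have "0 \<le> (A + 1) / (- C)" using C A0 by (intro divide_nonneg_pos) auto
      then have "t\<^sup>2 = (A + 1) / (- C)" unfolding t_def by (rule real_sqrt_pow2)
      then have t2: "t\<^sup>2 * C = - (A + 1)" using C by (simp add: field_simps)
      have "0 \<le> (A + 2 * t * B + t\<^sup>2 * C) + (A + 2 * (-t) * B + (-t)\<^sup>2 * C)"
        using h[of t] h[of "-t"] by linarith
      also have "\<dots> = 2 * A + 2 * (t\<^sup>2 * C)" by (simp add: algebra_simps)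
      also have "\<dots> = -2" using t2 by simp
      finally show False by simp
    qed
    then have C: "C > 0" using False by simp
    have "0 \<le> A + 2 * (- B / C) * B + (- B / C)\<^sup>2 * C" by (rule h)
    also have "\<dots> = A - B\<^sup>2 / C" using C by (simp add: field_simps power2_eq_square)
    finally show ?thesis using C by (simp add: field_simps)
  qed
qed

lemma eps_le:
  fixes a b C :: real
  assumes "\<And>e. e > 0 \<Longrightarrow> a \<le> b + e * C"
  shows "a \<le> b"
proof (rule field_le_epsilon)
  fix e :: real assume e: "e > 0"
  show "a \<le> b + e"
  proof (cases "C > 0")
    case True
    have "a \<le> b + (e / C) * C" using assms[of "e / C"] e True by simp
    then show ?thesis using True by simp
  next
    case False
    then have "e * C \<le> 0" using e by (simp add: mult_nonneg_nonpos)
    then show ?thesis using assms[OF e] e by linarith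
  qed
qed

locale msetting =
  fixes \<nu> :: "'a::metric_space measure"
  assumes sets_nu: "sets \<nu> = sets borel" and space_nu: "space \<nu> = UNIV"
    and fin: "finite_measure \<nu>" and cpt: "compact (UNIV::'a set)"
begin

sublocale finite_measure \<nu> by (rule fin)

lemma meas_cont: "continuous_on UNIV (g::'a\<Rightarrow>real) \<Longrightarrow> g \<in> borel_measurable \<nu>"
  using borel_measurable_continuous_onI measurable_cong_sets[OF sets_nu refl] by blast

lemma bdd_int: "g \<in> borel_measurable \<nu> \<Longrightarrow> (\<And>x. \<bar>g x\<bar> \<le> B) \<Longrightarrow> integrable \<nu> (g::'a\<Rightarrow>real)"
  by (rule integrable_const_bound[where B=B]) auto

lemma L2_int: assumes "is_L2 \<nu> v" shows "integrable \<nu> v"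
proof -
  have m: "v \<in> borel_measurable \<nu>" and s: "integrable \<nu> (\<lambda>x. (v x)\<^sup>2)" using assms by (auto simp: is_L2_def)
  have "integrable \<nu> (\<lambda>x. 1 + (v x)\<^sup>2)" using s by simp
  then show ?thesis
  proof (rule Bochner_Integration.integrable_bound[where g=v])
    show "AE x in \<nu>. norm (v x) \<le> norm (1 + (v x)\<^sup>2)"
    proof
      fix x
      have "0 \<le> (\<bar>v x\<bar> - 1)\<^sup>2" by simp
      then have "\<bar>v x\<bar> \<le> 1 + (v x)\<^sup>2"
        by (simp add: power2_eq_square algebra_simps abs_mult_self_eq)
      then show "norm (v x) \<le> norm (1 + (v x)\<^sup>2)" by simp
    qed
  qed (rule m)
qed

lemma bdd_L2: "g \<in> borel_measurable \<nu> \<Longrightarrow> (\<And>x. \<bar>g x\<bar> \<le> B) \<Longrightarrow> is_L2 \<nu> g"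
  unfolding is_L2_def
proof safe
  assume m: "g \<in> borel_measurable \<nu>" and b: "\<And>x. \<bar>g x\<bar> \<le> B"
  show "integrable \<nu> (\<lambda>x. (g x)\<^sup>2)"
  proof (rule bdd_int[where B="B*B"])
    fix x have "\<bar>g x\<bar> * \<bar>g x\<bar> \<le> B * B" using b[of x] by (intro mult_mono) auto
    then show "\<bar>(g x)\<^sup>2\<bar> \<le> B * B" by (simp add: power2_eq_square abs_mult)
  qed (use m in auto)
qed

lemma int_abs_le:
  fixes f g :: "'a \<Rightarrow> real"
  assumes "integrable \<nu> f" "integrable \<nu> g" "\<And>x. \<bar>f x\<bar> \<le> g x"
  shows "\<bar>integral\<^sup>L \<nu> f\<bar> \<le> integral\<^sup>L \<nu> g"
  by (rule order_trans[OF integral_abs_bound Bochner_Integration.integral_mono])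
    (use assms in auto)

lemma bdd_mult_int:
  fixes v g :: "'a \<Rightarrow> real"
  assumes v: "integrable \<nu> v" and g: "g \<in> borel_measurable \<nu>" and b: "\<And>y. \<bar>g y\<bar> \<le> B"
  shows "integrable \<nu> (\<lambda>y. g y * v y)"
proof (rule Bochner_Integration.integrable_bound[where f="\<lambda>y. \<bar>B\<bar> * v y"])
  show "integrable \<nu> (\<lambda>y. \<bar>B\<bar> * v y)" using v by simp
  show "(\<lambda>y. g y * v y) \<in> borel_measurable \<nu>" using g borel_measurable_integrable[OF v] by measurable
  show "AE x in \<nu>. norm (g x * v x) \<le> norm (\<bar>B\<bar> * v x)"
  proof (rule AE_I2)
    fix x
    have "\<bar>g x\<bar> * \<bar>v x\<bar> \<le> \<bar>B\<bar> * \<bar>v x\<bar>"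
      using b[of x] by (intro mult_right_mono) auto
    then show "norm (g x * v x) \<le> norm (\<bar>B\<bar> * v x)" by (simp add: abs_mult)
  qed
qed

lemma L2_scale: "is_L2 \<nu> v \<Longrightarrow> is_L2 \<nu> (\<lambda>x. t * v x)"
  unfolding is_L2_def by (auto simp: power_mult_distrib)

lemma wavg:
  fixes \<psi> g :: "'a \<Rightarrow> real"
  assumes psi: "integrable \<nu> \<psi>" "\<And>x. 0 \<le> \<psi> x" "(\<integral>x. \<psi> x \<partial>\<nu>) = 1"
    and g: "g \<in> borel_measurable \<nu>" "\<And>x. \<bar>g x\<bar> \<le> G"
    and close: "\<And>x. \<psi> x \<noteq> 0 \<Longrightarrow> \<bar>g x - a\<bar> \<le> \<eta>"
  shows "\<bar>(\<integral>x. \<psi> x * g x \<partial>\<nu>) - a\<bar> \<le> \<eta>"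
proof -
  have ig: "integrable \<nu> (\<lambda>x. g x * \<psi> x)" by (rule bdd_mult_int[OF psi(1) g])
  have ig': "integrable \<nu> (\<lambda>x. \<psi> x * g x)" using ig by (simp add: mult.commute)
  have "(\<integral>x. \<psi> x * g x \<partial>\<nu>) - a = (\<integral>x. \<psi> x * g x \<partial>\<nu>) - (\<integral>x. a * \<psi> x \<partial>\<nu>)"
    using psi(3) by simp
  also have "\<dots> = (\<integral>x. \<psi> x * g x - a * \<psi> x \<partial>\<nu>)"
    by (rule Bochner_Integration.integral_diff[symmetric]) (use ig' psi(1) in auto)
  also have "\<bar>\<dots>\<bar> \<le> (\<integral>x. \<eta> * \<psi> x \<partial>\<nu>)"
  proof (rule int_abs_le)
    show "integrable \<nu> (\<lambda>x. \<psi> x * g x - a * \<psi> x)" using ig' psi(1) by auto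
    show "integrable \<nu> (\<lambda>x. \<eta> * \<psi> x)" using psi(1) by auto
    fix x
    show "\<bar>\<psi> x * g x - a * \<psi> x\<bar> \<le> \<eta> * \<psi> x"
    proof (cases "\<psi> x = 0")
      case False
      have "\<psi> x * g x - a * \<psi> x = \<psi> x * (g x - a)" by (simp add: algebra_simps)
      then have "\<bar>\<psi> x * g x - a * \<psi> x\<bar> = \<psi> x * \<bar>g x - a\<bar>"
        using psi(2)[of x] by (simp add: abs_mult)
      also have "\<dots> \<le> \<psi> x * \<eta>" using close[OF False] psi(2)[of x] by (simp add: mult_left_mono)
      finally show ?thesis by (simp add: mult.commute)
    qed simp
  qed
  also have "\<dots> = \<eta>" using psi(3) by simp
  finally show ?thesis .
qed

end

locale kern = msetting \<nu> for \<nu> :: "'a::metric_space measure" +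
  fixes K :: "'a::metric_space \<Rightarrow> 'a \<Rightarrow> real"
  assumes Kc: "continuous_on UNIV (\<lambda>(x, z). K x z)" and Ks: "strictly_pos_def_kernel K"
begin

lemma Ksym: "K x y = K y x" using Ks by (auto simp: strictly_pos_def_kernel_def)

lemmas cpt2 = compact_Times[OF cpt cpt, unfolded UNIV_Times_UNIV]

lemma Kbnd_ex: "\<exists>B. \<forall>x y. \<bar>K x y\<bar> \<le> B"
proof -
  have "compact ((\<lambda>(x, z). K x z) ` UNIV)"
    by (rule compact_continuous_image[OF Kc cpt2])
  then have "bounded ((\<lambda>(x, z). K x z) ` UNIV)" by (rule compact_imp_bounded)
  then obtain B where "\<forall>t\<in>(\<lambda>(x, z). K x z) ` UNIV. norm t \<le> B" by (auto simp: bounded_iff)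
  then show ?thesis by force
qed

definition "KB = (SOME B. \<forall>x y. \<bar>K x y\<bar> \<le> B)"

lemma Kbnd: "\<bar>K x y\<bar> \<le> KB"
  using someI_ex[OF Kbnd_ex] unfolding KB_def by blast

lemma KB_nonneg: "0 \<le> KB" using Kbnd[of undefined undefined] by linarith

lemma K_unif:
  assumes "\<eta> > 0"
  shows "\<exists>\<delta>>0. \<forall>x y x' y'. dist x x' < \<delta> \<longrightarrow> dist y y' < \<delta> \<longrightarrow> \<bar>K x y - K x' y'\<bar> < \<eta>"
proof -
  have "uniformly_continuous_on UNIV (\<lambda>(x, z). K x z)"
    by (rule compact_uniformly_continuous[OF Kc cpt2])
  then obtain d where d: "d > 0" and
    hd: "\<And>p p'. dist p' p < d \<Longrightarrow> dist ((\<lambda>(x, z). K x z) p') ((\<lambda>(x, z). K x z) p) < \<eta>"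
    using assms unfolding uniformly_continuous_on_def by (metis UNIV_I)
  show ?thesis
  proof (intro exI[of _ "d/2"] conjI allI impI)
    fix x y x' y' :: 'a
    assume a: "dist x x' < d/2" "dist y y' < d/2"
    have "dist (x, y) (x', y') = sqrt ((dist x x')\<^sup>2 + (dist y y')\<^sup>2)" by (rule dist_Pair_Pair)
    also have "\<dots> \<le> dist x x' + dist y y'" by (rule real_le_lsqrt) (auto simp: power2_sum)
    also have "\<dots> < d" using a by simp
    finally have "dist (x', y') (x, y) < d" by (simp add: dist_commute)
    from hd[OF this] show "\<bar>K x y - K x' y'\<bar> < \<eta>" by (simp add: dist_real_def abs_minus_commute)
  qed (use d in auto)
qed

lemma K_cont1: "continuous_on UNIV (\<lambda>z. K x z)"
proof -
  have "continuous_on UNIV (\<lambda>z. (\<lambda>(x, z). K x z) (x, z))"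
    by (rule continuous_on_compose2[OF Kc continuous_on_Pair[OF continuous_on_const continuous_on_id]]) auto
  then show ?thesis by simp
qed

lemma K_meas1: "(\<lambda>z. K x z) \<in> borel_measurable \<nu>"
  by (rule meas_cont[OF K_cont1])

lemma K_meas2: "(\<lambda>z. K z x) \<in> borel_measurable \<nu>"
  using K_meas1[of x] by (simp add: Ksym)

lemma Kv_int: "integrable \<nu> v \<Longrightarrow> integrable \<nu> (\<lambda>y. K x y * v y)"
  by (rule bdd_mult_int[OF _ K_meas1 Kbnd])

lemma C_diff_bound:
  assumes v: "integrable \<nu> v" and b: "\<And>y. \<bar>K x y - K x' y\<bar> \<le> \<eta>"
  shows "\<bar>cov_op \<nu> K v x - cov_op \<nu> K v x'\<bar> \<le> \<eta> * (\<integral>y. \<bar>v y\<bar> \<partial>\<nu>)"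
proof -
  have "cov_op \<nu> K v x - cov_op \<nu> K v x' = (\<integral>y. K x y * v y - K x' y * v y \<partial>\<nu>)"
    unfolding cov_op_def by (rule Bochner_Integration.integral_diff[symmetric, OF Kv_int[OF v] Kv_int[OF v]])
  also have "\<bar>\<dots>\<bar> \<le> (\<integral>y. \<eta> * \<bar>v y\<bar> \<partial>\<nu>)"
  proof (rule int_abs_le)
    show "integrable \<nu> (\<lambda>y. K x y * v y - K x' y * v y)" using Kv_int[OF v] by auto
    show "integrable \<nu> (\<lambda>y. \<eta> * \<bar>v y\<bar>)" using v by auto
    fix y
    have "\<bar>K x y * v y - K x' y * v y\<bar> = \<bar>K x y - K x' y\<bar> * \<bar>v y\<bar>"
      by (simp add: left_diff_distrib[symmetric] abs_mult)
    also have "\<dots> \<le> \<eta> * \<bar>v y\<bar>" using b[of y] by (intro mult_right_mono) auto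
    finally show "\<bar>K x y * v y - K x' y * v y\<bar> \<le> \<eta> * \<bar>v y\<bar>" .
  qed
  also have "\<dots> = \<eta> * (\<integral>y. \<bar>v y\<bar> \<partial>\<nu>)" by simp
  finally show ?thesis .
qed

lemma C_cont:
  assumes v: "integrable \<nu> v"
  shows "continuous_on UNIV (cov_op \<nu> K v)"
  unfolding continuous_on_iff
proof (intro ballI allI impI)
  fix x :: 'a and e :: real
  assume e: "e > 0"
  define I where "I = (\<integral>y. \<bar>v y\<bar> \<partial>\<nu>)"
  have I0: "I \<ge> 0" unfolding I_def by simp
  define \<eta> where "\<eta> = e / (I + 1)"
  have eta: "\<eta> > 0" using e I0 by (simp add: \<eta>_def)
  obtain d where d: "d > 0" and hd: "\<And>x y x' y'. dist x x' < d \<Longrightarrow> dist y y' < d \<Longrightarrow> \<bar>K x y - K x' y'\<bar> < \<eta>"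
    using K_unif[OF eta] by blast
  show "\<exists>d>0. \<forall>x'\<in>UNIV. dist x' x < d \<longrightarrow> dist (cov_op \<nu> K v x') (cov_op \<nu> K v x) < e"
  proof (intro exI[of _ d] conjI ballI impI)
    fix x' assume "dist x' x < d"
    then have "\<And>y. \<bar>K x' y - K x y\<bar> \<le> \<eta>" using hd[of x' x] d by (simp add: less_imp_le)
    from C_diff_bound[OF v this] have "\<bar>cov_op \<nu> K v x' - cov_op \<nu> K v x\<bar> \<le> \<eta> * I" by (simp add: I_def)
    also have "\<eta> * I < e"
    proof -
      have "\<eta> * I \<le> \<eta> * (I + 1) - \<eta>" by (simp add: algebra_simps)
      also have "\<eta> * (I + 1) = e" using I0 by (simp add: \<eta>_def)
      finally show ?thesis using eta by linarith
    qed
    finally show "dist (cov_op \<nu> K v x') (cov_op \<nu> K v x) < e" by (simp add: dist_real_def)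
  qed (rule d)
qed

lemma C_meas: "integrable \<nu> v \<Longrightarrow> cov_op \<nu> K v \<in> borel_measurable \<nu>"
  by (rule meas_cont[OF C_cont])

lemma C_bnd:
  assumes v: "integrable \<nu> v"
  shows "\<bar>cov_op \<nu> K v x\<bar> \<le> KB * (\<integral>y. \<bar>v y\<bar> \<partial>\<nu>)"
proof -
  have "\<bar>cov_op \<nu> K v x\<bar> \<le> (\<integral>y. KB * \<bar>v y\<bar> \<partial>\<nu>)"
    unfolding cov_op_def
    by (rule int_abs_le[OF Kv_int[OF v]])
      (use v Kbnd[of x] in \<open>auto simp: abs_mult mult_right_mono\<close>)
  then show ?thesis by simp
qed

lemma C_L2: "integrable \<nu> v \<Longrightarrow> is_L2 \<nu> (cov_op \<nu> K v)"
  by (rule bdd_L2[OF C_meas C_bnd])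

lemma Cw_int: "integrable \<nu> v \<Longrightarrow> integrable \<nu> w \<Longrightarrow> integrable \<nu> (\<lambda>x. cov_op \<nu> K v x * w x)"
  by (rule bdd_mult_int[OF _ C_meas C_bnd])


lemma Kdisc:
  assumes eta: "\<eta> > 0"
  shows "\<exists>S (\<phi> :: 'a \<Rightarrow> 'a \<Rightarrow> real). finite S \<and> (\<forall>c. continuous_on UNIV (\<phi> c)) \<and> (\<forall>c x. 0 \<le> \<phi> c x \<and> \<phi> c x \<le> 1)
     \<and> (\<forall>x. (\<Sum>c\<in>S. \<phi> c x) = 1)
     \<and> (\<forall>x y. \<bar>K x y - (\<Sum>c\<in>S. \<Sum>d\<in>S. \<phi> c x * \<phi> d y * K c d)\<bar> \<le> \<eta>)"
proof -
  obtain d where d: "d > 0" and hd: "\<And>x y x' y'. dist x x' < d \<Longrightarrow> dist y y' < d \<Longrightarrow> \<bar>K x y - K x' y'\<bar> < \<eta>"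
    using K_unif[OF eta] by blast
  obtain S and \<phi> :: "'a \<Rightarrow> 'a \<Rightarrow> real" where S: "finite S" and c: "\<forall>c. continuous_on UNIV (\<phi> c)"
    and b: "\<forall>c x. 0 \<le> \<phi> c x \<and> \<phi> c x \<le> 1" and s1: "\<forall>x. (\<Sum>c\<in>S. \<phi> c x) = 1"
    and r: "\<forall>c x. \<phi> c x \<noteq> 0 \<longrightarrow> dist x c < d"
    using pou[OF cpt d] by blast
  have A: "\<bar>K x y - (\<Sum>c\<in>S. \<Sum>e\<in>S. \<phi> c x * \<phi> e y * K c e)\<bar> \<le> \<eta>" for x y
  proof -
    have "(\<Sum>c\<in>S. \<Sum>e\<in>S. \<phi> c x * \<phi> e y * K x y) = (\<Sum>c\<in>S. \<phi> c x * (\<Sum>e\<in>S. \<phi> e y * K x y))"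
      by (simp add: sum_distrib_left mult.assoc)
    also have "\<dots> = (\<Sum>c\<in>S. \<phi> c x * ((\<Sum>e\<in>S. \<phi> e y) * K x y))"
      by (simp add: sum_distrib_right)
    also have "\<dots> = (\<Sum>c\<in>S. \<phi> c x * K x y)"
      using s1 by simp
    also have "\<dots> = (\<Sum>c\<in>S. \<phi> c x) * K x y"
      by (rule sum_distrib_right[symmetric])
    also have "\<dots> = K x y" using s1 by simp
    finally have kx: "K x y = (\<Sum>c\<in>S. \<Sum>e\<in>S. \<phi> c x * \<phi> e y * K x y)" by simp
    have "K x y - (\<Sum>c\<in>S. \<Sum>e\<in>S. \<phi> c x * \<phi> e y * K c e)
        = (\<Sum>c\<in>S. \<Sum>e\<in>S. \<phi> c x * \<phi> e y * (K x y - K c e))"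
      by (subst kx) (simp add: sum_subtractf[symmetric] right_diff_distrib)
    also have "\<bar>\<dots>\<bar> \<le> (\<Sum>c\<in>S. \<Sum>e\<in>S. \<phi> c x * \<phi> e y * \<eta>)"
    proof -
      have "\<bar>\<phi> c x * \<phi> e y * (K x y - K c e)\<bar> \<le> \<phi> c x * \<phi> e y * \<eta>" for c e
      proof (cases "\<phi> c x = 0 \<or> \<phi> e y = 0")
        case True then show ?thesis by auto
      next
        case False
        then have "dist x c < d" "dist y e < d" using r by auto
        then have "\<bar>K x y - K c e\<bar> \<le> \<eta>" using hd by (simp add: less_imp_le)
        moreover have nn: "0 \<le> \<phi> c x * \<phi> e y" using b by simp
        moreover have "\<bar>\<phi> c x * \<phi> e y * (K x y - K c e)\<bar> = (\<phi> c x * \<phi> e y) * \<bar>K x y - K c e\<bar>"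
          using nn by (simp add: abs_mult[of "\<phi> c x * \<phi> e y"])
        ultimately show ?thesis by (simp add: mult_left_mono)
      qed
      then show ?thesis
        by (rule order_trans[OF sum_abs sum_mono[OF order_trans[OF sum_abs sum_mono]]])
    qed
    also have "\<dots> = (\<Sum>c\<in>S. \<phi> c x * (\<Sum>e\<in>S. \<phi> e y * \<eta>))"
      by (simp add: sum_distrib_left mult.assoc)
    also have "\<dots> = (\<Sum>c\<in>S. \<phi> c x * ((\<Sum>e\<in>S. \<phi> e y) * \<eta>))"
      by (simp add: sum_distrib_right)
    also have "\<dots> = (\<Sum>c\<in>S. \<phi> c x * \<eta>)"
      using s1 by simp
    also have "\<dots> = (\<Sum>c\<in>S. \<phi> c x) * \<eta>"
      by (rule sum_distrib_right[symmetric])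
    also have "\<dots> = \<eta>" using s1 by simp
    finally show ?thesis .
  qed
  show ?thesis
    by (rule exI[of _ S], rule exI[of _ \<phi>]) (use S c b s1 A in blast)
qed

lemma B_disc:
  fixes v w :: "'a \<Rightarrow> real" and \<phi> :: "'a \<Rightarrow> 'a \<Rightarrow> real"
  assumes v: "integrable \<nu> v" and w: "integrable \<nu> w"
    and S: "finite S" and c: "\<forall>c. continuous_on UNIV (\<phi> c)" and b: "\<forall>c x. 0 \<le> \<phi> c x \<and> \<phi> c x \<le> 1"
    and A: "\<forall>x y. \<bar>K x y - (\<Sum>c\<in>S. \<Sum>d\<in>S. \<phi> c x * \<phi> d y * K c d)\<bar> \<le> \<eta>"
  shows "\<bar>(\<integral>x. cov_op \<nu> K v x * w x \<partial>\<nu>) -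
     (\<Sum>c\<in>S. \<Sum>d\<in>S. (\<integral>x. \<phi> c x * w x \<partial>\<nu>) * (\<integral>y. \<phi> d y * v y \<partial>\<nu>) * K c d)\<bar>
     \<le> \<eta> * (\<integral>y. \<bar>v y\<bar> \<partial>\<nu>) * (\<integral>x. \<bar>w x\<bar> \<partial>\<nu>)"
proof -
  define V where "V d = (\<integral>y. \<phi> d y * v y \<partial>\<nu>)" for d
  define W where "W c = (\<integral>x. \<phi> c x * w x \<partial>\<nu>)" for c
  define M where "M c = (\<Sum>d\<in>S. K c d * V d)" for c
  define Iv where "Iv = (\<integral>y. \<bar>v y\<bar> \<partial>\<nu>)"
  have eta0: "0 \<le> \<eta>" using A by (meson abs_ge_zero order_trans)
  have Iv0: "0 \<le> Iv" by (simp add: Iv_def)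
  have phim: "\<phi> c \<in> borel_measurable \<nu>" for c using c meas_cont by blast
  have phib: "\<bar>\<phi> c x\<bar> \<le> 1" for c x using b by auto
  have iv: "integrable \<nu> (\<lambda>y. \<phi> d y * v y)" for d by (rule bdd_mult_int[OF v phim phib])
  have iw: "integrable \<nu> (\<lambda>y. \<phi> d y * w y)" for d by (rule bdd_mult_int[OF w phim phib])
  have step1: "\<bar>cov_op \<nu> K v x - (\<Sum>c\<in>S. \<phi> c x * M c)\<bar> \<le> \<eta> * Iv" for x
  proof -
    define F where "F y = (\<Sum>c\<in>S. \<Sum>d\<in>S. (\<phi> c x * K c d) * (\<phi> d y * v y))" for y
    have iF: "integrable \<nu> F" unfolding F_def using iv by auto
    have "(\<integral>y. F y \<partial>\<nu>) = (\<Sum>c\<in>S. \<integral>y. (\<Sum>d\<in>S. (\<phi> c x * K c d) * (\<phi> d y * v y)) \<partial>\<nu>)"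
      unfolding F_def by (rule Bochner_Integration.integral_sum) (use iv in auto)
    also have "\<dots> = (\<Sum>c\<in>S. \<Sum>d\<in>S. (\<phi> c x * K c d) * V d)"
      by (rule sum.cong[OF refl], subst Bochner_Integration.integral_sum) (use iv in \<open>auto simp: V_def\<close>)
    also have "\<dots> = (\<Sum>c\<in>S. \<phi> c x * M c)"
      by (simp add: M_def sum_distrib_left mult.assoc)
    finally have eF: "(\<integral>y. F y \<partial>\<nu>) = (\<Sum>c\<in>S. \<phi> c x * M c)" .
    have "cov_op \<nu> K v x - (\<Sum>c\<in>S. \<phi> c x * M c) = (\<integral>y. K x y * v y - F y \<partial>\<nu>)"
      unfolding cov_op_def eF[symmetric]
      by (rule Bochner_Integration.integral_diff[symmetric, OF Kv_int[OF v] iF])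
    also have "\<bar>\<dots>\<bar> \<le> (\<integral>y. \<eta> * \<bar>v y\<bar> \<partial>\<nu>)"
    proof (rule int_abs_le)
      show "integrable \<nu> (\<lambda>y. K x y * v y - F y)" using Kv_int[OF v] iF by auto
      show "integrable \<nu> (\<lambda>y. \<eta> * \<bar>v y\<bar>)" using v by auto
      fix y
      have "F y = (\<Sum>c\<in>S. \<Sum>d\<in>S. \<phi> c x * \<phi> d y * K c d) * v y"
        unfolding F_def sum_distrib_right by (simp add: mult_ac)
      then have "K x y * v y - F y = (K x y - (\<Sum>c\<in>S. \<Sum>d\<in>S. \<phi> c x * \<phi> d y * K c d)) * v y"
        by (simp add: left_diff_distrib)
      then show "\<bar>K x y * v y - F y\<bar> \<le> \<eta> * \<bar>v y\<bar>"
        using A by (simp add: abs_mult mult_right_mono)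
    qed
    also have "\<dots> = \<eta> * Iv" by (simp add: Iv_def)
    finally show ?thesis .
  qed
  define G where "G x = (\<Sum>c\<in>S. M c * (\<phi> c x * w x))" for x
  have iG: "integrable \<nu> G" unfolding G_def using iw by auto
  have eG: "(\<integral>x. G x \<partial>\<nu>) = (\<Sum>c\<in>S. \<Sum>d\<in>S. W c * V d * K c d)"
  proof -
    have "(\<integral>x. G x \<partial>\<nu>) = (\<Sum>c\<in>S. \<integral>x. M c * (\<phi> c x * w x) \<partial>\<nu>)"
      unfolding G_def by (rule Bochner_Integration.integral_sum) (use iw in auto)
    also have "\<dots> = (\<Sum>c\<in>S. M c * W c)" by (simp add: W_def)
    also have "\<dots> = (\<Sum>c\<in>S. \<Sum>d\<in>S. W c * V d * K c d)"
      unfolding M_def sum_distrib_right by (simp add: mult_ac)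
    finally show ?thesis .
  qed
  have "(\<integral>x. cov_op \<nu> K v x * w x \<partial>\<nu>) - (\<Sum>c\<in>S. \<Sum>d\<in>S. W c * V d * K c d)
      = (\<integral>x. cov_op \<nu> K v x * w x - G x \<partial>\<nu>)"
    unfolding eG[symmetric] by (rule Bochner_Integration.integral_diff[symmetric, OF Cw_int[OF v w] iG])
  also have "\<bar>\<dots>\<bar> \<le> (\<integral>x. (\<eta> * Iv) * \<bar>w x\<bar> \<partial>\<nu>)"
  proof (rule int_abs_le)
    show "integrable \<nu> (\<lambda>x. cov_op \<nu> K v x * w x - G x)" using Cw_int[OF v w] iG by auto
    show "integrable \<nu> (\<lambda>x. (\<eta> * Iv) * \<bar>w x\<bar>)" using w by auto
    fix x
    have "G x = (\<Sum>c\<in>S. \<phi> c x * M c) * w x" unfolding G_def sum_distrib_right by (simp add: mult_ac)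
    then have "cov_op \<nu> K v x * w x - G x = (cov_op \<nu> K v x - (\<Sum>c\<in>S. \<phi> c x * M c)) * w x"
      by (simp add: left_diff_distrib)
    then show "\<bar>cov_op \<nu> K v x * w x - G x\<bar> \<le> (\<eta> * Iv) * \<bar>w x\<bar>"
      using step1[of x] by (simp add: abs_mult mult_right_mono)
  qed
  also have "\<dots> = \<eta> * Iv * (\<integral>x. \<bar>w x\<bar> \<partial>\<nu>)" by simp
  finally show ?thesis unfolding W_def V_def Iv_def .
qed

lemma B_sym:
  assumes v: "integrable \<nu> v" and w: "integrable \<nu> w"
  shows "(\<integral>x. cov_op \<nu> K v x * w x \<partial>\<nu>) = (\<integral>x. cov_op \<nu> K w x * v x \<partial>\<nu>)"
proof -
  define Iv where "Iv = (\<integral>y. \<bar>v y\<bar> \<partial>\<nu>)"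
  define Iw where "Iw = (\<integral>y. \<bar>w y\<bar> \<partial>\<nu>)"
  have "(\<integral>x. cov_op \<nu> K v x * w x \<partial>\<nu>) - (\<integral>x. cov_op \<nu> K w x * v x \<partial>\<nu>) = 0"
  proof (rule eps_zero[where C="2 * Iv * Iw"])
    fix e :: real assume e: "e > 0"
    obtain S and \<phi> :: "'a \<Rightarrow> 'a \<Rightarrow> real" where S: "finite S" and c: "\<forall>c. continuous_on UNIV (\<phi> c)"
      and b: "\<forall>c x. 0 \<le> \<phi> c x \<and> \<phi> c x \<le> 1"
      and A: "\<forall>x y. \<bar>K x y - (\<Sum>c\<in>S. \<Sum>d\<in>S. \<phi> c x * \<phi> d y * K c d)\<bar> \<le> e"
      using Kdisc[OF e] by blast
    note d1 = B_disc[OF v w S c b A]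
    note d2 = B_disc[OF w v S c b A]
    have eq: "(\<Sum>c\<in>S. \<Sum>d\<in>S. (\<integral>x. \<phi> c x * v x \<partial>\<nu>) * (\<integral>y. \<phi> d y * w y \<partial>\<nu>) * K c d)
      = (\<Sum>c\<in>S. \<Sum>d\<in>S. (\<integral>x. \<phi> c x * w x \<partial>\<nu>) * (\<integral>y. \<phi> d y * v y \<partial>\<nu>) * K c d)"
      by (subst sum.swap) (simp add: Ksym[of _ "_::'a"] mult_ac)
    show "\<bar>(\<integral>x. cov_op \<nu> K v x * w x \<partial>\<nu>) - (\<integral>x. cov_op \<nu> K w x * v x \<partial>\<nu>)\<bar> \<le> e * (2 * Iv * Iw)"
      using d1 d2 unfolding eq Iv_def Iw_def by (simp add: algebra_simps abs_le_iff)
  qed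
  then show ?thesis by simp
qed

lemma B_pos:
  assumes v: "integrable \<nu> v"
  shows "0 \<le> (\<integral>x. cov_op \<nu> K v x * v x \<partial>\<nu>)"
proof (rule eps_le[where C="(\<integral>y. \<bar>v y\<bar> \<partial>\<nu>) * (\<integral>y. \<bar>v y\<bar> \<partial>\<nu>)"])
  fix e :: real assume e: "e > 0"
  obtain S and \<phi> :: "'a \<Rightarrow> 'a \<Rightarrow> real" where S: "finite S" and c: "\<forall>c. continuous_on UNIV (\<phi> c)"
    and b: "\<forall>c x. 0 \<le> \<phi> c x \<and> \<phi> c x \<le> 1"
    and A: "\<forall>x y. \<bar>K x y - (\<Sum>c\<in>S. \<Sum>d\<in>S. \<phi> c x * \<phi> d y * K c d)\<bar> \<le> e"
    using Kdisc[OF e] by blast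
  note d1 = B_disc[OF v v S c b A]
  have "0 \<le> (\<Sum>c\<in>S. \<Sum>d\<in>S. (\<integral>x. \<phi> c x * v x \<partial>\<nu>) * (\<integral>y. \<phi> d y * v y \<partial>\<nu>) * K c d)"
    by (rule dsum_nonneg[OF Ks S])
  then show "0 \<le> (\<integral>x. cov_op \<nu> K v x * v x \<partial>\<nu>) + e * ((\<integral>y. \<bar>v y\<bar> \<partial>\<nu>) * (\<integral>y. \<bar>v y\<bar> \<partial>\<nu>))"
    using d1 by (simp add: algebra_simps abs_le_iff)
qed

lemma C_scale: "cov_op \<nu> K (\<lambda>y. t * v y) x = t * cov_op \<nu> K v x"
  unfolding cov_op_def by (simp add: mult.left_commute)

lemma C_add_scale:
  assumes v: "integrable \<nu> v" and w: "integrable \<nu> w"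
  shows "cov_op \<nu> K (\<lambda>y. v y + t * w y) x = cov_op \<nu> K v x + t * cov_op \<nu> K w x"
proof -
  have "(\<lambda>y. K x y * (v y + t * w y)) = (\<lambda>y. K x y * v y + t * (K x y * w y))"
    by (auto simp: algebra_simps)
  then show ?thesis unfolding cov_op_def
    using Bochner_Integration.integral_add[OF Kv_int[OF v] integrable_mult_right[OF Kv_int[OF w]], of x t]
    by simp
qed

lemma C_sum:
  assumes S: "finite S" and f: "\<And>s. s \<in> S \<Longrightarrow> integrable \<nu> (f s)"
  shows "cov_op \<nu> K (\<lambda>y. \<Sum>s\<in>S. f s y) x = (\<Sum>s\<in>S. cov_op \<nu> K (f s) x)"
  unfolding cov_op_def sum_distrib_left
  by (rule Bochner_Integration.integral_sum) (use Kv_int f in auto)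

lemma BB_scale: "BB \<nu> K (\<lambda>y. t * v y) (\<lambda>y. t * v y) = t\<^sup>2 * BB \<nu> K v v"
  unfolding BB_def C_scale by (simp add: power2_eq_square mult_ac)

lemma BB_scale_r:
  fixes u v :: "'a \<Rightarrow> real" and t :: real
  shows "(\<integral>x. u x * (t * v x) \<partial>\<nu>) = t * (\<integral>x. u x * v x \<partial>\<nu>)"
proof -
  have "(\<lambda>x. u x * (t * v x)) = (\<lambda>x. t * (u x * v x))" by (auto simp: mult_ac)
  then show ?thesis by simp
qed

lemma Q_expand:
  assumes v: "integrable \<nu> v" and w: "integrable \<nu> w"
  shows "BB \<nu> K (\<lambda>y. v y + t * w y) (\<lambda>y. v y + t * w y) = BB \<nu> K v v + 2 * t * BB \<nu> K v w + t\<^sup>2 * BB \<nu> K w w"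
proof -
  have e: "(\<lambda>x. cov_op \<nu> K (\<lambda>y. v y + t * w y) x * (v x + t * w x)) =
     (\<lambda>x. (cov_op \<nu> K v x * v x + t * (cov_op \<nu> K v x * w x)) + (t * (cov_op \<nu> K w x * v x) + t\<^sup>2 * (cov_op \<nu> K w x * w x)))"
    by (auto simp: C_add_scale[OF v w] algebra_simps power2_eq_square)
  have i1: "integrable \<nu> (\<lambda>x. cov_op \<nu> K v x * v x + t * (cov_op \<nu> K v x * w x))"
    using Cw_int[OF v v] Cw_int[OF v w] by auto
  have i2: "integrable \<nu> (\<lambda>x. t * (cov_op \<nu> K w x * v x) + t\<^sup>2 * (cov_op \<nu> K w x * w x))"
    using Cw_int[OF w v] Cw_int[OF w w] by auto
  have "BB \<nu> K (\<lambda>y. v y + t * w y) (\<lambda>y. v y + t * w y) = BB \<nu> K v v + t * BB \<nu> K v w + (t * BB \<nu> K w v + t\<^sup>2 * BB \<nu> K w w)"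
    unfolding BB_def e Bochner_Integration.integral_add[OF i1 i2]
    using Cw_int[OF v v] Cw_int[OF v w] Cw_int[OF w v] Cw_int[OF w w] by simp
  also have "BB \<nu> K w v = BB \<nu> K v w" unfolding BB_def by (rule B_sym[OF w v])
  finally show ?thesis by simp
qed

lemma BB_pos: "integrable \<nu> v \<Longrightarrow> 0 \<le> BB \<nu> K v v"
  unfolding BB_def by (rule B_pos)

lemma CS:
  assumes v: "integrable \<nu> v" and w: "integrable \<nu> w"
  shows "(BB \<nu> K v w)\<^sup>2 \<le> BB \<nu> K v v * BB \<nu> K w w"
proof (rule CS_quad)
  fix t
  have "integrable \<nu> (\<lambda>y. v y + t * w y)" using v w by auto
  from BB_pos[OF this] show "0 \<le> BB \<nu> K v v + 2 * t * BB \<nu> K v w + t\<^sup>2 * BB \<nu> K w w"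
    unfolding Q_expand[OF v w] .
qed

lemma cm_C:
  assumes v: "is_L2 \<nu> v"
  shows "cm_norm \<nu> K (cov_op \<nu> K v) \<le> ereal (sqrt (BB \<nu> K v v))"
  unfolding cm_norm_def
proof (rule Sup_least, clarify)
  fix w assume w: "is_L2 \<nu> w" and w1: "(\<integral>x. cov_op \<nu> K w x * w x \<partial>\<nu>) \<le> 1"
  have iv: "integrable \<nu> v" and iw: "integrable \<nu> w" using v w L2_int by auto
  have "BB \<nu> K v w \<le> \<bar>BB \<nu> K v w\<bar>" by simp
  also have "\<dots> = sqrt ((BB \<nu> K v w)\<^sup>2)" by simp
  also have "\<dots> \<le> sqrt (BB \<nu> K v v * BB \<nu> K w w)" by (rule real_sqrt_le_mono[OF CS[OF iv iw]])
  also have "\<dots> \<le> sqrt (BB \<nu> K v v * 1)"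
    using w1 BB_pos[OF iv] by (intro real_sqrt_le_mono mult_left_mono) (auto simp: BB_def)
  finally show "ereal (\<integral>x. cov_op \<nu> K v x * w x \<partial>\<nu>) \<le> ereal (sqrt (BB \<nu> K v v))"
    by (simp add: BB_def)
qed

lemma cm_upper:
  assumes "is_L2 \<nu> w" "BB \<nu> K w w \<le> 1"
  shows "ereal (\<integral>x. u x * w x \<partial>\<nu>) \<le> cm_norm \<nu> K u"
  unfolding cm_norm_def by (rule Sup_upper) (use assms in \<open>auto simp: BB_def\<close>)

lemma zero_L2: "is_L2 \<nu> (\<lambda>x. 0)"
  by (rule bdd_L2[where B=0]) auto

lemma cm_nonneg: "0 \<le> cm_norm \<nu> K u"
proof -
  have "ereal 0 \<le> cm_norm \<nu> K u"
    using cm_upper[OF zero_L2, of u] by (simp add: BB_def cov_op_def)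
  then show ?thesis by (simp add: zero_ereal_def)
qed

lemma cm_lower:
  assumes u: "is_L2 \<nu> u" and v: "is_L2 \<nu> v" and r: "cm_norm \<nu> K u = ereal r"
  shows "(\<integral>x. u x * v x \<partial>\<nu>) \<le> r * sqrt (BB \<nu> K v v)"
proof -
  have iv: "integrable \<nu> v" using v L2_int by auto
  have elem: "(\<integral>x. u x * (t * v x) \<partial>\<nu>) \<le> r" if "BB \<nu> K (\<lambda>x. t * v x) (\<lambda>x. t * v x) \<le> 1" for t
    using cm_upper[OF L2_scale[OF v] that, of u] r by simp
  have Q0: "0 \<le> BB \<nu> K v v" by (rule BB_pos[OF iv])
  show ?thesis
  proof (cases "BB \<nu> K v v = 0")
    case True
    have "(\<integral>x. u x * v x \<partial>\<nu>) \<le> 0"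
    proof (rule ccontr)
      assume "\<not> ?thesis"
      then have p: "(\<integral>x. u x * v x \<partial>\<nu>) > 0" by simp
      define t where "t = (\<bar>r\<bar> + 1) / (\<integral>x. u x * v x \<partial>\<nu>)"
      have "(\<integral>x. u x * (t * v x) \<partial>\<nu>) \<le> r" by (rule elem) (simp add: BB_scale True)
      also have "(\<integral>x. u x * (t * v x) \<partial>\<nu>) = \<bar>r\<bar> + 1" unfolding BB_scale_r t_def using p by simp
      finally show False by simp
    qed
    then show ?thesis using True by simp
  next
    case False
    then have Qp: "BB \<nu> K v v > 0" using Q0 by simp
    define s where "s = sqrt (BB \<nu> K v v)"
    have s: "s > 0" using Qp by (simp add: s_def)
    have "(\<integral>x. u x * ((1 / s) * v x) \<partial>\<nu>) \<le> r"
    proof (rule elem)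
      have "BB \<nu> K (\<lambda>x. (1 / s) * v x) (\<lambda>x. (1 / s) * v x) = (1 / s)\<^sup>2 * BB \<nu> K v v" by (rule BB_scale)
      also have "\<dots> = 1" using Qp by (simp add: s_def power_divide)
      finally show "BB \<nu> K (\<lambda>x. (1 / s) * v x) (\<lambda>x. (1 / s) * v x) \<le> 1" by simp
    qed
    then have "(1 / s) * (\<integral>x. u x * v x \<partial>\<nu>) \<le> r" unfolding BB_scale_r .
    then show ?thesis using s by (simp add: s_def[symmetric] field_simps)
  qed
qed

lemma Q_ball:
  fixes \<alpha> :: "'a \<Rightarrow> real" and \<psi> :: "'a \<Rightarrow> 'a \<Rightarrow> real"
  assumes S: "finite S"
    and pm: "\<And>s. s \<in> S \<Longrightarrow> \<psi> s \<in> borel_measurable \<nu>"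
    and pb: "\<And>s x. s \<in> S \<Longrightarrow> 0 \<le> \<psi> s x \<and> \<psi> s x \<le> P"
    and p1: "\<And>s. s \<in> S \<Longrightarrow> (\<integral>x. \<psi> s x \<partial>\<nu>) = 1"
    and close: "\<And>s t x y. s \<in> S \<Longrightarrow> t \<in> S \<Longrightarrow> \<psi> t x \<noteq> 0 \<Longrightarrow> \<psi> s y \<noteq> 0 \<Longrightarrow> \<bar>K x y - K t s\<bar> \<le> \<eta>"
  shows "\<bar>BB \<nu> K (\<lambda>x. \<Sum>s\<in>S. \<alpha> s * \<psi> s x) (\<lambda>x. \<Sum>s\<in>S. \<alpha> s * \<psi> s x)
           - (\<Sum>t\<in>S. \<Sum>s\<in>S. \<alpha> t * \<alpha> s * K t s)\<bar> \<le> \<eta> * (\<Sum>s\<in>S. \<bar>\<alpha> s\<bar>)\<^sup>2"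
proof -
  define v where "v x = (\<Sum>s\<in>S. \<alpha> s * \<psi> s x)" for x
  define A where "A = (\<Sum>s\<in>S. \<bar>\<alpha> s\<bar>)"
  define m where "m t = (\<Sum>s\<in>S. \<alpha> s * K t s)" for t
  have ip: "integrable \<nu> (\<psi> s)" if "s \<in> S" for s
    by (rule bdd_int[OF pm[OF that], of P]) (use pb[OF that] in auto)
  have iv: "integrable \<nu> v" unfolding v_def using ip by auto
  have Cv: "cov_op \<nu> K v x = (\<Sum>s\<in>S. \<alpha> s * cov_op \<nu> K (\<psi> s) x)" for x
    unfolding v_def by (subst C_sum[OF S]) (use ip in \<open>auto simp: C_scale\<close>)
  have Cp: "\<bar>cov_op \<nu> K (\<psi> s) x - K t s\<bar> \<le> \<eta>" if st: "s \<in> S" "t \<in> S" and x: "\<psi> t x \<noteq> 0" for s t x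
  proof -
    have "cov_op \<nu> K (\<psi> s) x = (\<integral>y. \<psi> s y * K x y \<partial>\<nu>)" unfolding cov_op_def by (simp add: mult.commute)
    also have "\<bar>\<dots> - K t s\<bar> \<le> \<eta>"
      by (rule wavg[OF ip[OF st(1)] _ p1[OF st(1)] K_meas1 Kbnd]) (use pb[OF st(1)] close[OF st x] in auto)
    finally show ?thesis .
  qed
  have Cvc: "\<bar>cov_op \<nu> K v x - m t\<bar> \<le> \<eta> * A" if t: "t \<in> S" and x: "\<psi> t x \<noteq> 0" for t x
  proof -
    have "cov_op \<nu> K v x - m t = (\<Sum>s\<in>S. \<alpha> s * (cov_op \<nu> K (\<psi> s) x - K t s))"
      unfolding Cv m_def by (simp add: sum_subtractf[symmetric] right_diff_distrib)
    also have "\<bar>\<dots>\<bar> \<le> (\<Sum>s\<in>S. \<bar>\<alpha> s\<bar> * \<eta>)"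
    proof (rule order_trans[OF sum_abs sum_mono])
      fix s assume s: "s \<in> S"
      show "\<bar>\<alpha> s * (cov_op \<nu> K (\<psi> s) x - K t s)\<bar> \<le> \<bar>\<alpha> s\<bar> * \<eta>"
        unfolding abs_mult by (rule mult_left_mono[OF Cp[OF s t x]]) simp
    qed
    also have "\<dots> = \<eta> * A" unfolding A_def sum_distrib_left by (simp add: mult.commute)
    finally show ?thesis .
  qed
  have ic: "integrable \<nu> (\<lambda>x. cov_op \<nu> K v x * \<psi> t x)" if "t \<in> S" for t
    by (rule Cw_int[OF iv ip[OF that]])
  have pt: "\<bar>(\<integral>x. \<psi> t x * cov_op \<nu> K v x \<partial>\<nu>) - m t\<bar> \<le> \<eta> * A" if t: "t \<in> S" for t
    by (rule wavg[OF ip[OF t] _ p1[OF t] C_meas[OF iv] C_bnd[OF iv]]) (use pb[OF t] Cvc[OF t] in auto)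
  have "BB \<nu> K v v = (\<integral>x. (\<Sum>t\<in>S. \<alpha> t * (cov_op \<nu> K v x * \<psi> t x)) \<partial>\<nu>)"
    unfolding BB_def v_def[symmetric] by (rule Bochner_Integration.integral_cong) (auto simp: v_def sum_distrib_left mult_ac)
  also have "\<dots> = (\<Sum>t\<in>S. \<alpha> t * (\<integral>x. \<psi> t x * cov_op \<nu> K v x \<partial>\<nu>))"
    by (subst Bochner_Integration.integral_sum) (use ic in \<open>auto simp: mult.commute\<close>)
  finally have eB: "BB \<nu> K v v = (\<Sum>t\<in>S. \<alpha> t * (\<integral>x. \<psi> t x * cov_op \<nu> K v x \<partial>\<nu>))" .
  have eT: "(\<Sum>t\<in>S. \<Sum>s\<in>S. \<alpha> t * \<alpha> s * K t s) = (\<Sum>t\<in>S. \<alpha> t * m t)"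
    unfolding m_def by (simp add: sum_distrib_left mult.assoc)
  have "BB \<nu> K v v - (\<Sum>t\<in>S. \<Sum>s\<in>S. \<alpha> t * \<alpha> s * K t s)
      = (\<Sum>t\<in>S. \<alpha> t * ((\<integral>x. \<psi> t x * cov_op \<nu> K v x \<partial>\<nu>) - m t))"
    unfolding eB eT by (simp add: sum_subtractf[symmetric] right_diff_distrib)
  also have "\<bar>\<dots>\<bar> \<le> (\<Sum>t\<in>S. \<bar>\<alpha> t\<bar> * (\<eta> * A))"
  proof (rule order_trans[OF sum_abs sum_mono])
    fix t assume t: "t \<in> S"
    show "\<bar>\<alpha> t * ((\<integral>x. \<psi> t x * cov_op \<nu> K v x \<partial>\<nu>) - m t)\<bar> \<le> \<bar>\<alpha> t\<bar> * (\<eta> * A)"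
      unfolding abs_mult by (rule mult_left_mono[OF pt[OF t]]) simp
  qed
  also have "\<dots> = (\<Sum>t\<in>S. \<bar>\<alpha> t\<bar>) * (\<eta> * A)" by (rule sum_distrib_right[symmetric])
  also have "\<dots> = \<eta> * A\<^sup>2" by (simp add: A_def power2_eq_square mult_ac)
  finally show ?thesis unfolding v_def A_def .
qed

end

lemma Q_compare:
  assumes k1: "kern \<nu> K1" and k2: "kern \<nu> K2" and M: "M > 0"
    and hyp: "\<forall>u\<in>cm_space \<nu> K1. cm_norm \<nu> K2 u \<le> ereal M * cm_norm \<nu> K1 u"
    and v: "is_L2 \<nu> v"
  shows "BB \<nu> K1 v v \<le> M\<^sup>2 * BB \<nu> K2 v v"
proof -
  interpret k1: kern \<nu> K1 by (rule k1)
  interpret k2: kern \<nu> K2 by (rule k2)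
  have iv: "integrable \<nu> v" by (rule k1.L2_int[OF v])
  have Q1: "0 \<le> BB \<nu> K1 v v" by (rule k1.BB_pos[OF iv])
  have Q2: "0 \<le> BB \<nu> K2 v v" by (rule k2.BB_pos[OF iv])
  show ?thesis
  proof (cases "BB \<nu> K1 v v = 0")
    case True then show ?thesis using Q2 by simp
  next
    case False
    then have Q1p: "BB \<nu> K1 v v > 0" using Q1 by simp
    define u where "u = cov_op \<nu> K1 v"
    have uL2: "is_L2 \<nu> u" unfolding u_def by (rule k1.C_L2[OF iv])
    have c1: "cm_norm \<nu> K1 u \<le> ereal (sqrt (BB \<nu> K1 v v))" unfolding u_def by (rule k1.cm_C[OF v])
    then have "cm_norm \<nu> K1 u < \<infinity>" using less_le_trans by fastforce
    then have ucm: "u \<in> cm_space \<nu> K1" using uL2 by (simp add: cm_space_def)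
    have "cm_norm \<nu> K2 u \<le> ereal M * cm_norm \<nu> K1 u" using hyp ucm by blast
    also have "\<dots> \<le> ereal M * ereal (sqrt (BB \<nu> K1 v v))" by (rule ereal_mult_left_mono[OF c1]) (use M in simp)
    finally have c2: "cm_norm \<nu> K2 u \<le> ereal (M * sqrt (BB \<nu> K1 v v))" by simp
    have c20: "0 \<le> cm_norm \<nu> K2 u" by (rule k2.cm_nonneg)
    define r where "r = real_of_ereal (cm_norm \<nu> K2 u)"
    have fin: "\<bar>cm_norm \<nu> K2 u\<bar> \<noteq> \<infinity>" using c2 c20 by auto
    have r: "cm_norm \<nu> K2 u = ereal r" unfolding r_def using ereal_real'[OF fin] by simp
    have rM: "r \<le> M * sqrt (BB \<nu> K1 v v)" using c2 r by simp
    have r0: "0 \<le> r" using c20 r by simp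
    have "BB \<nu> K1 v v = (\<integral>x. u x * v x \<partial>\<nu>)" by (simp add: BB_def u_def)
    also have "\<dots> \<le> r * sqrt (BB \<nu> K2 v v)" by (rule k2.cm_lower[OF uL2 v r])
    also have "\<dots> \<le> (M * sqrt (BB \<nu> K1 v v)) * sqrt (BB \<nu> K2 v v)" by (rule mult_right_mono[OF rM]) (use Q2 in simp)
    finally have "sqrt (BB \<nu> K1 v v) * sqrt (BB \<nu> K1 v v) \<le> sqrt (BB \<nu> K1 v v) * (M * sqrt (BB \<nu> K2 v v))"
      using Q1 by (simp add: mult_ac)
    then have "sqrt (BB \<nu> K1 v v) \<le> M * sqrt (BB \<nu> K2 v v)"
      using Q1p by (subst (asm) mult_le_cancel_left_pos) auto
    then have "(sqrt (BB \<nu> K1 v v))\<^sup>2 \<le> (M * sqrt (BB \<nu> K2 v v))\<^sup>2"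
      by (rule power_mono) (use Q1 in simp)
    then show ?thesis using Q1 Q2 by (simp add: power_mult_distrib)
  qed
qed

lemma bil_compare:
  assumes k1: "kern \<nu> K1" and k2: "kern \<nu> K2" and M: "M > 0"
    and hyp: "\<forall>u\<in>cm_space \<nu> K1. cm_norm \<nu> K2 u \<le> ereal M * cm_norm \<nu> K1 u"
    and pos: "\<forall>U. open U \<and> U \<noteq> {} \<longrightarrow> emeasure \<nu> U > 0"
    and fa: "finite (fsupp \<alpha>)"
  shows "bil K1 \<alpha> \<alpha> \<le> M\<^sup>2 * bil K2 \<alpha> \<alpha>"
proof -
  interpret k1: kern \<nu> K1 by (rule k1)
  interpret k2: kern \<nu> K2 by (rule k2)
  define S where "S = fsupp \<alpha>"
  define A where "A = (\<Sum>s\<in>S. \<bar>\<alpha> s\<bar>)"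
  have b1: "bil K1 \<alpha> \<alpha> = (\<Sum>t\<in>S. \<Sum>s\<in>S. \<alpha> t * \<alpha> s * K1 t s)"
    unfolding S_def by (rule bil_superset) (use fa in auto)
  have b2: "bil K2 \<alpha> \<alpha> = (\<Sum>t\<in>S. \<Sum>s\<in>S. \<alpha> t * \<alpha> s * K2 t s)"
    unfolding S_def by (rule bil_superset) (use fa in auto)
  have S: "finite S" using fa by (simp add: S_def)
  show ?thesis
  proof (rule eps_le[where C="(M\<^sup>2 + 1) * A\<^sup>2"])
    fix e :: real assume e: "e > 0"
    obtain d1 where d1: "d1 > 0" and h1: "\<And>x y x' y'. dist x x' < d1 \<Longrightarrow> dist y y' < d1 \<Longrightarrow> \<bar>K1 x y - K1 x' y'\<bar> < e"
      using k1.K_unif[OF e] by blast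
    obtain d2 where d2: "d2 > 0" and h2: "\<And>x y x' y'. dist x x' < d2 \<Longrightarrow> dist y y' < d2 \<Longrightarrow> \<bar>K2 x y - K2 x' y'\<bar> < e"
      using k2.K_unif[OF e] by blast
    define d where "d = min d1 d2"
    have d: "d > 0" using d1 d2 by (simp add: d_def)
    define mu where "mu s = measure \<nu> (ball s d)" for s
    have mu: "mu s > 0" for s
    proof -
      have "emeasure \<nu> (ball s d) > 0" using pos d by auto
      then show ?thesis unfolding mu_def using k1.emeasure_eq_measure by (simp add: zero_less_measure_iff)
    qed
    define \<psi> where "\<psi> s x = indicator (ball s d) x / mu s" for s x
    define P where "P = (\<Sum>s\<in>S. 1 / mu s)"
    have bs: "ball s d \<in> sets \<nu>" for s using k1.sets_nu by simp
    have pm: "\<psi> s \<in> borel_measurable \<nu>" for s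
      unfolding \<psi>_def using bs by measurable
    have pb: "0 \<le> \<psi> s x \<and> \<psi> s x \<le> P" if s: "s \<in> S" for s x
    proof
      show "0 \<le> \<psi> s x" using mu[of s] by (simp add: \<psi>_def)
      have "\<psi> s x \<le> 1 / mu s" using mu[of s] by (simp add: \<psi>_def indicator_def divide_right_mono)
      also have "\<dots> \<le> P" unfolding P_def by (rule member_le_sum[OF s]) (use S mu in \<open>auto intro!: divide_nonneg_pos less_imp_le\<close>)
      finally show "\<psi> s x \<le> P" .
    qed
    have p1: "(\<integral>x. \<psi> s x \<partial>\<nu>) = 1" for s
      using mu[of s] by (simp add: \<psi>_def mu_def k1.space_nu)
    have close: "dist x t < d" "dist y s < d" if "\<psi> t x \<noteq> 0" "\<psi> s y \<noteq> 0" for s t x y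
      using that by (auto simp: \<psi>_def indicator_def dist_commute split: if_splits)
    have cl1: "\<bar>K1 x y - K1 t s\<bar> \<le> e" if "\<psi> t x \<noteq> 0" "\<psi> s y \<noteq> 0" for s t x y
      using h1[of x t y s] close[OF that] by (simp add: d_def less_imp_le)
    have cl2: "\<bar>K2 x y - K2 t s\<bar> \<le> e" if "\<psi> t x \<noteq> 0" "\<psi> s y \<noteq> 0" for s t x y
      using h2[of x t y s] close[OF that] by (simp add: d_def less_imp_le)
    define v where "v x = (\<Sum>s\<in>S. \<alpha> s * \<psi> s x)" for x
    have vm: "v \<in> borel_measurable \<nu>" unfolding v_def using pm by measurable
    have vb: "\<bar>v x\<bar> \<le> (\<Sum>s\<in>S. \<bar>\<alpha> s\<bar> * P)" for x
      unfolding v_def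
      by (rule order_trans[OF sum_abs sum_mono]) (use pb in \<open>auto simp: abs_mult intro!: mult_left_mono\<close>)
    have vL2: "is_L2 \<nu> v" by (rule k1.bdd_L2[OF vm vb])
    have q1: "\<bar>BB \<nu> K1 v v - bil K1 \<alpha> \<alpha>\<bar> \<le> e * A\<^sup>2"
      unfolding v_def b1 A_def by (rule k1.Q_ball[OF S pm pb p1 cl1])
    have q2: "\<bar>BB \<nu> K2 v v - bil K2 \<alpha> \<alpha>\<bar> \<le> e * A\<^sup>2"
      unfolding v_def b2 A_def by (rule k2.Q_ball[OF S pm pb p1 cl2])
    have qc: "BB \<nu> K1 v v \<le> M\<^sup>2 * BB \<nu> K2 v v" by (rule Q_compare[OF k1 k2 M hyp vL2])
    have "M\<^sup>2 * BB \<nu> K2 v v \<le> M\<^sup>2 * (bil K2 \<alpha> \<alpha> + e * A\<^sup>2)"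
      using q2 by (intro mult_left_mono) auto
    then show "bil K1 \<alpha> \<alpha> \<le> M\<^sup>2 * bil K2 \<alpha> \<alpha> + e * ((M\<^sup>2 + 1) * A\<^sup>2)"
      using q1 qc by (simp add: algebra_simps abs_le_iff)
  qed
qed

definition psdk :: "('a \<Rightarrow> 'a \<Rightarrow> real) \<Rightarrow> bool" where
  "psdk k \<longleftrightarrow> (\<forall>x y. k x y = k y x) \<and> (\<forall>a. finite (fsupp a) \<longrightarrow> 0 \<le> bil k a a)"

lemma spd_psdk: "strictly_pos_def_kernel k \<Longrightarrow> psdk k"
  using bil_nonneg unfolding psdk_def strictly_pos_def_kernel_def by blast

lemma fs_lin: "finite (fsupp a) \<Longrightarrow> finite (fsupp b) \<Longrightarrow> finite (fsupp (\<lambda>x. a x + r * b x))"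
  by (rule finite_subset[of _ "fsupp a \<union> fsupp b"]) (auto simp: fsupp_def)

lemma fs_diff: "finite (fsupp a) \<Longrightarrow> finite (fsupp b) \<Longrightarrow> finite (fsupp (\<lambda>x. a x - b x))"
  by (rule finite_subset[of _ "fsupp a \<union> fsupp b"]) (auto simp: fsupp_def)

lemma fs_scale: "finite (fsupp a) \<Longrightarrow> finite (fsupp (\<lambda>x. r * a x))"
  by (rule finite_subset[of _ "fsupp a"]) (auto simp: fsupp_def)

lemma fs_sum:
  assumes "finite I" "\<And>i. i \<in> I \<Longrightarrow> finite (fsupp (a i))"
  shows "finite (fsupp (\<lambda>x. \<Sum>i\<in>I. \<beta> i * a i x))"
proof (rule finite_subset[of _ "\<Union>i\<in>I. fsupp (a i)"])
  show "fsupp (\<lambda>x. \<Sum>i\<in>I. \<beta> i * a i x) \<subseteq> (\<Union>i\<in>I. fsupp (a i))"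
  proof
    fix x assume "x \<in> fsupp (\<lambda>x. \<Sum>i\<in>I. \<beta> i * a i x)"
    then have "(\<Sum>i\<in>I. \<beta> i * a i x) \<noteq> 0" by (simp add: fsupp_def)
    then have "\<exists>i\<in>I. \<beta> i * a i x \<noteq> 0"
      by (metis (mono_tags, lifting) sum.neutral)
    then obtain i where "i \<in> I" "\<beta> i * a i x \<noteq> 0" by blast
    then show "x \<in> (\<Union>i\<in>I. fsupp (a i))" by (auto simp: fsupp_def)
  qed
qed (use assms in auto)

lemma bil_lin_l:
  assumes "finite (fsupp a)" "finite (fsupp b)" "finite (fsupp c)"
  shows "bil k (\<lambda>x. a x + r * b x) c = bil k a c + r * bil k b c"
proof -
  define S where "S = fsupp a \<union> fsupp b \<union> fsupp c"
  have S: "finite S" using assms by (simp add: S_def)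
  have s1: "fsupp (\<lambda>x. a x + r * b x) \<subseteq> S" by (auto simp: S_def fsupp_def)
  have e1: "bil k (\<lambda>x. a x + r * b x) c = (\<Sum>x\<in>S. \<Sum>y\<in>S. (a x + r * b x) * c y * k x y)"
    by (rule bil_superset[OF S]) (auto simp: S_def fsupp_def)
  have e2: "bil k a c = (\<Sum>x\<in>S. \<Sum>y\<in>S. a x * c y * k x y)"
    by (rule bil_superset[OF S]) (auto simp: S_def fsupp_def)
  have e3: "bil k b c = (\<Sum>x\<in>S. \<Sum>y\<in>S. b x * c y * k x y)"
    by (rule bil_superset[OF S]) (auto simp: S_def fsupp_def)
  show ?thesis unfolding e1 e2 e3 sum_distrib_left sum.distrib[symmetric]
    by (intro sum.cong refl) (simp add: distrib_right mult.assoc)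
qed

lemma bil_sym:
  assumes k: "\<forall>x y. k x y = k y x" and "finite (fsupp a)" "finite (fsupp b)"
  shows "bil k a b = bil k b a"
proof -
  define S where "S = fsupp a \<union> fsupp b"
  have S: "finite S" using assms by (simp add: S_def)
  have e1: "bil k a b = (\<Sum>x\<in>S. \<Sum>y\<in>S. a x * b y * k x y)"
    by (rule bil_superset[OF S]) (auto simp: S_def fsupp_def)
  have e2: "bil k b a = (\<Sum>x\<in>S. \<Sum>y\<in>S. b x * a y * k x y)"
    by (rule bil_superset[OF S]) (auto simp: S_def fsupp_def)
  show ?thesis unfolding e1 e2
  proof (subst sum.swap, intro sum.cong refl)
    fix x y
    show "a y * b x * k y x = b x * a y * k x y" using k by (simp add: mult.commute)
  qed
qed

lemma bil_scale_l:
  assumes "finite (fsupp a)" "finite (fsupp c)"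
  shows "bil k (\<lambda>x. r * a x) c = r * bil k a c"
  using bil_lin_l[of "\<lambda>x. 0" a c k r] assms by (simp add: fsupp_def bil_def)

lemma psdk_sym: "psdk k \<Longrightarrow> \<forall>x y. k x y = k y x" by (simp add: psdk_def)
lemma psdk_pos: "psdk k \<Longrightarrow> finite (fsupp a) \<Longrightarrow> 0 \<le> bil k a a" by (simp add: psdk_def)

lemma bil_lin_r:
  assumes k: "psdk k" and "finite (fsupp a)" "finite (fsupp b)" "finite (fsupp c)"
  shows "bil k c (\<lambda>x. a x + r * b x) = bil k c a + r * bil k c b"
  using assms bil_lin_l[of a b c k r] bil_sym[OF psdk_sym[OF k]] fs_lin by metis

lemma Q_exp_b:
  assumes k: "psdk k" and a: "finite (fsupp a)" and b: "finite (fsupp b)"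
  shows "bil k (\<lambda>x. a x + t * b x) (\<lambda>x. a x + t * b x) = bil k a a + 2 * t * bil k a b + t\<^sup>2 * bil k b b"
proof -
  have ab: "finite (fsupp (\<lambda>x. a x + t * b x))" by (rule fs_lin[OF a b])
  have "bil k (\<lambda>x. a x + t * b x) (\<lambda>x. a x + t * b x) = bil k a (\<lambda>x. a x + t * b x) + t * bil k b (\<lambda>x. a x + t * b x)"
    by (rule bil_lin_l[OF a b ab])
  also have "\<dots> = (bil k a a + t * bil k a b) + t * (bil k b a + t * bil k b b)"
    using bil_lin_r[OF k a b a] bil_lin_r[OF k a b b] by simp
  also have "bil k b a = bil k a b" by (rule bil_sym[OF psdk_sym[OF k] b a])
  finally show ?thesis by (simp add: power2_eq_square algebra_simps)
qed

lemma bil_CS: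
  assumes k: "psdk k" and a: "finite (fsupp a)" and b: "finite (fsupp b)"
  shows "(bil k a b)\<^sup>2 \<le> bil k a a * bil k b b"
proof (rule CS_quad)
  fix t
  show "0 \<le> bil k a a + 2 * t * bil k a b + t\<^sup>2 * bil k b b"
    using psdk_pos[OF k fs_lin[OF a b, of t]] unfolding Q_exp_b[OF k a b] .
qed

lemma Q_par:
  assumes k: "psdk k" and a: "finite (fsupp a)" and b: "finite (fsupp b)"
  shows "bil k (\<lambda>x. a x + t * b x) (\<lambda>x. a x + t * b x) \<le> 2 * bil k a a + 2 * t\<^sup>2 * bil k b b"
  using psdk_pos[OF k fs_lin[OF a b, of "-t"]] Q_exp_b[OF k a b, of t] Q_exp_b[OF k a b, of "-t"]
    psdk_pos[OF k a]
  by (simp add: power2_eq_square)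

lemma Q_scale:
  assumes a: "finite (fsupp a)"
  shows "bil k (\<lambda>x. r * a x) (\<lambda>x. r * a x) = r\<^sup>2 * bil k a a"
proof -
  have e1: "bil k (\<lambda>x. r * a x) (\<lambda>x. r * a x) = (\<Sum>x\<in>fsupp a. \<Sum>y\<in>fsupp a. (r * a x) * (r * a y) * k x y)"
    by (rule bil_superset[OF a]) (auto simp: fsupp_def)
  have e2: "bil k a a = (\<Sum>x\<in>fsupp a. \<Sum>y\<in>fsupp a. a x * a y * k x y)"
    by (rule bil_superset[OF a]) auto
  show ?thesis unfolding e1 e2 sum_distrib_left
    by (intro sum.cong refl) (simp add: power2_eq_square mult_ac)
qed

lemma N_tri:
  assumes k: "psdk k" and a: "finite (fsupp a)" and b: "finite (fsupp b)"
  shows "sqrt (bil k (\<lambda>x. a x + b x) (\<lambda>x. a x + b x)) \<le> sqrt (bil k a a) + sqrt (bil k b b)"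
proof -
  have qa: "0 \<le> bil k a a" and qb: "0 \<le> bil k b b" using psdk_pos[OF k] a b by auto
  have "bil k a b \<le> sqrt ((bil k a b)\<^sup>2)" by simp
  also have "\<dots> \<le> sqrt (bil k a a * bil k b b)" by (rule real_sqrt_le_mono[OF bil_CS[OF k a b]])
  also have "\<dots> = sqrt (bil k a a) * sqrt (bil k b b)" by (simp add: real_sqrt_mult)
  finally have cs: "bil k a b \<le> sqrt (bil k a a) * sqrt (bil k b b)" .
  have "bil k (\<lambda>x. a x + b x) (\<lambda>x. a x + b x) = bil k a a + 2 * bil k a b + bil k b b"
    using Q_exp_b[OF k a b, of 1] by simp
  also have "\<dots> \<le> (sqrt (bil k a a) + sqrt (bil k b b))\<^sup>2"
    using cs qa qb by (simp add: power2_sum)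
  finally show ?thesis
    by (rule real_le_lsqrt[OF add_nonneg_nonneg[OF real_sqrt_ge_zero[OF qa] real_sqrt_ge_zero[OF qb]]])
qed

lemma H0_fin: "a \<in> H0 k \<Longrightarrow> finite (fsupp (a j))" by (simp add: H0_def)

lemma H0_cauchy: "a \<in> H0 k \<Longrightarrow> e > 0 \<Longrightarrow> \<exists>N. \<forall>i\<ge>N. \<forall>j\<ge>N. bil k (\<lambda>x. a i x - a j x) (\<lambda>x. a i x - a j x) < e"
  by (simp add: H0_def)

lemma H0_lin:
  assumes k: "psdk k" and a: "a \<in> H0 k" and b: "b \<in> H0 k"
  shows "(\<lambda>j x. a j x + r * b j x) \<in> H0 k"
  unfolding H0_def
proof (intro CollectI conjI allI impI)
  fix j show "finite (fsupp (\<lambda>x. a j x + r * b j x))" using a b by (intro fs_lin H0_fin)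
next
  fix e :: real assume e: "e > 0"
  obtain N1 where N1: "\<And>i j. i \<ge> N1 \<Longrightarrow> j \<ge> N1 \<Longrightarrow> bil k (\<lambda>x. a i x - a j x) (\<lambda>x. a i x - a j x) < e / 4"
    using H0_cauchy[OF a, of "e/4"] e by auto
  obtain N2 where N2: "\<And>i j. i \<ge> N2 \<Longrightarrow> j \<ge> N2 \<Longrightarrow> bil k (\<lambda>x. b i x - b j x) (\<lambda>x. b i x - b j x) < e / (4 * (r\<^sup>2 + 1))"
  proof -
    have "4 * (r\<^sup>2 + 1) > 0" by (simp add: add_nonneg_pos)
    then have "e / (4 * (r\<^sup>2 + 1)) > 0" using e by (rule divide_pos_pos[rotated])
    from H0_cauchy[OF b this] show ?thesis using that by blast
  qed
  show "\<exists>N. \<forall>i\<ge>N. \<forall>j\<ge>N. bil k (\<lambda>x. a i x + r * b i x - (a j x + r * b j x)) (\<lambda>x. a i x + r * b i x - (a j x + r * b j x)) < e"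
  proof (intro exI[of _ "max N1 N2"] allI impI)
    fix i j assume ij: "max N1 N2 \<le> i" "max N1 N2 \<le> j"
    have fa: "finite (fsupp (\<lambda>x. a i x - a j x))" using a by (intro fs_diff H0_fin)
    have fb: "finite (fsupp (\<lambda>x. b i x - b j x))" using b by (intro fs_diff H0_fin)
    have eq: "(\<lambda>x. a i x + r * b i x - (a j x + r * b j x)) = (\<lambda>x. (a i x - a j x) + r * (b i x - b j x))"
      by (auto simp: algebra_simps)
    have "bil k (\<lambda>x. a i x + r * b i x - (a j x + r * b j x)) (\<lambda>x. a i x + r * b i x - (a j x + r * b j x))
        \<le> 2 * bil k (\<lambda>x. a i x - a j x) (\<lambda>x. a i x - a j x) + 2 * r\<^sup>2 * bil k (\<lambda>x. b i x - b j x) (\<lambda>x. b i x - b j x)"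
      unfolding eq by (rule Q_par[OF k fa fb])
    also have "\<dots> < 2 * (e / 4) + 2 * r\<^sup>2 * (e / (4 * (r\<^sup>2 + 1)))"
    proof -
      have "2 * r\<^sup>2 * bil k (\<lambda>x. b i x - b j x) (\<lambda>x. b i x - b j x) \<le> 2 * r\<^sup>2 * (e / (4 * (r\<^sup>2 + 1)))"
        using N2[of i j] ij by (intro mult_left_mono) auto
      then show ?thesis using N1[of i j] ij e by simp
    qed
    also have "2 * r\<^sup>2 * (e / (4 * (r\<^sup>2 + 1))) \<le> e / 2"
    proof -
      have "r\<^sup>2 + 1 > 0" by (simp add: add_nonneg_pos)
      then have "2 * r\<^sup>2 * (e / (4 * (r\<^sup>2 + 1))) = (e / 2) * (r\<^sup>2 / (r\<^sup>2 + 1))"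
        by (simp add: field_simps)
      also have "\<dots> \<le> (e / 2) * 1"
        using e \<open>r\<^sup>2 + 1 > 0\<close> by (intro mult_left_mono) (auto simp: divide_le_eq)
      finally show ?thesis by simp
    qed
    then have "2 * (e / 4) + 2 * r\<^sup>2 * (e / (4 * (r\<^sup>2 + 1))) \<le> e" by linarith
    finally show "bil k (\<lambda>x. a i x + r * b i x - (a j x + r * b j x)) (\<lambda>x. a i x + r * b i x - (a j x + r * b j x)) < e" .
  qed
qed

lemma H0_zero: "(\<lambda>j x. 0) \<in> H0 k"
  by (simp add: H0_def fsupp_def bil_def)

lemma H0_diff:
  assumes k: "psdk k" and a: "a \<in> H0 k" and b: "b \<in> H0 k"
  shows "(\<lambda>j x. a j x - b j x) \<in> H0 k"
  using H0_lin[OF k a b, of "-1"] by simp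

lemma H0_sum:
  assumes k: "psdk k" and I: "finite I" and Y: "\<And>i. i \<in> I \<Longrightarrow> Y i \<in> H0 k"
  shows "(\<lambda>j x. \<Sum>i\<in>I. \<beta> i * Y i j x) \<in> H0 k"
  using I Y
proof (induction I rule: finite_induct)
  case empty then show ?case using H0_zero by simp
next
  case (insert i0 I)
  have "(\<lambda>j x. \<Sum>i\<in>insert i0 I. \<beta> i * Y i j x) = (\<lambda>j x. (\<Sum>i\<in>I. \<beta> i * Y i j x) + \<beta> i0 * Y i0 j x)"
    using insert(1,2) by (simp add: add.commute)
  also have "\<dots> \<in> H0 k" by (rule H0_lin[OF k]) (use insert in auto)
  finally show ?case .
qed

lemma N_rev:
  assumes k: "psdk k" and a: "finite (fsupp a)" and b: "finite (fsupp b)"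
  shows "\<bar>sqrt (bil k a a) - sqrt (bil k b b)\<bar> \<le> sqrt (bil k (\<lambda>x. a x - b x) (\<lambda>x. a x - b x))"
proof -
  have d1: "finite (fsupp (\<lambda>x. a x - b x))" by (rule fs_diff[OF a b])
  have d2: "finite (fsupp (\<lambda>x. b x - a x))" by (rule fs_diff[OF b a])
  have "sqrt (bil k (\<lambda>x. b x + (a x - b x)) (\<lambda>x. b x + (a x - b x))) \<le> sqrt (bil k b b) + sqrt (bil k (\<lambda>x. a x - b x) (\<lambda>x. a x - b x))"
    by (rule N_tri[OF k b d1])
  then have i1: "sqrt (bil k a a) \<le> sqrt (bil k b b) + sqrt (bil k (\<lambda>x. a x - b x) (\<lambda>x. a x - b x))" by simp
  have "sqrt (bil k (\<lambda>x. a x + (b x - a x)) (\<lambda>x. a x + (b x - a x))) \<le> sqrt (bil k a a) + sqrt (bil k (\<lambda>x. b x - a x) (\<lambda>x. b x - a x))"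
    by (rule N_tri[OF k a d2])
  then have i2: "sqrt (bil k b b) \<le> sqrt (bil k a a) + sqrt (bil k (\<lambda>x. b x - a x) (\<lambda>x. b x - a x))" by simp
  have "(\<lambda>x. b x - a x) = (\<lambda>x. (-1) * (a x - b x))" by auto
  then have "bil k (\<lambda>x. b x - a x) (\<lambda>x. b x - a x) = bil k (\<lambda>x. a x - b x) (\<lambda>x. a x - b x)"
    using Q_scale[OF d1, of k "-1"] by simp
  then have "sqrt (bil k (\<lambda>x. b x - a x) (\<lambda>x. b x - a x)) = sqrt (bil k (\<lambda>x. a x - b x) (\<lambda>x. a x - b x))"
    by simp
  then show ?thesis unfolding abs_le_iff using i1 i2 by linarith
qed

lemma N_conv:
  assumes k: "psdk k" and a: "a \<in> H0 k"
  shows "convergent (\<lambda>j. sqrt (bil k (a j) (a j)))"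
proof (rule Cauchy_convergent, rule metric_CauchyI)
  fix e :: real assume e: "e > 0"
  obtain N where N: "\<And>i j. i \<ge> N \<Longrightarrow> j \<ge> N \<Longrightarrow> bil k (\<lambda>x. a i x - a j x) (\<lambda>x. a i x - a j x) < e\<^sup>2"
    using H0_cauchy[OF a, of "e\<^sup>2"] e by auto
  show "\<exists>M. \<forall>m\<ge>M. \<forall>n\<ge>M. dist (sqrt (bil k (a m) (a m))) (sqrt (bil k (a n) (a n))) < e"
  proof (intro exI[of _ N] allI impI)
    fix m n assume mn: "m \<ge> N" "n \<ge> N"
    have "dist (sqrt (bil k (a m) (a m))) (sqrt (bil k (a n) (a n))) \<le> sqrt (bil k (\<lambda>x. a m x - a n x) (\<lambda>x. a m x - a n x))"
      unfolding dist_real_def by (rule N_rev[OF k H0_fin[OF a] H0_fin[OF a]])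
    also have "\<dots> < sqrt (e\<^sup>2)" by (rule real_sqrt_less_mono[OF N[OF mn]])
    also have "\<dots> = e" using e by simp
    finally show "dist (sqrt (bil k (a m) (a m))) (sqrt (bil k (a n) (a n))) < e" .
  qed
qed

lemma Q_conv:
  assumes k: "psdk k" and a: "a \<in> H0 k"
  shows "convergent (\<lambda>j. bil k (a j) (a j))"
proof -
  obtain L where L: "(\<lambda>j. sqrt (bil k (a j) (a j))) \<longlonglongrightarrow> L" using N_conv[OF k a] by (auto simp: convergent_def)
  have "(\<lambda>j. (sqrt (bil k (a j) (a j)))\<^sup>2) \<longlonglongrightarrow> L\<^sup>2" by (intro tendsto_intros L)
  moreover have "(\<lambda>j. (sqrt (bil k (a j) (a j)))\<^sup>2) = (\<lambda>j. bil k (a j) (a j))"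
    using psdk_pos[OF k H0_fin[OF a]] by simp
  ultimately show ?thesis by (auto simp: convergent_def)
qed

lemma covar_lim:
  assumes k: "psdk k" and a: "a \<in> H0 k" and b: "b \<in> H0 k"
  shows "(\<lambda>j. bil k (a j) (b j)) \<longlonglongrightarrow> covar k a b"
proof -
  define s1 where "s1 = (\<lambda>j x. a j x + 1 * b j x)"
  define s2 where "s2 = (\<lambda>j x. a j x + (-1) * b j x)"
  have h1: "s1 \<in> H0 k" unfolding s1_def by (rule H0_lin[OF k a b])
  have h2: "s2 \<in> H0 k" unfolding s2_def by (rule H0_lin[OF k a b])
  have eq: "bil k (a j) (b j) = (bil k (s1 j) (s1 j) - bil k (s2 j) (s2 j)) / 4" for j
    unfolding s1_def s2_def
    using Q_exp_b[OF k H0_fin[OF a, of j] H0_fin[OF b, of j], of 1] Q_exp_b[OF k H0_fin[OF a, of j] H0_fin[OF b, of j], of "-1"]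
    by (simp del: mult_1 mult_minus_left add_uminus_conv_diff)
  have "convergent (\<lambda>j. (bil k (s1 j) (s1 j) - bil k (s2 j) (s2 j)) / 4)"
  proof -
    obtain L1 where L1: "(\<lambda>j. bil k (s1 j) (s1 j)) \<longlonglongrightarrow> L1" using Q_conv[OF k h1] by (auto simp: convergent_def)
    obtain L2 where L2: "(\<lambda>j. bil k (s2 j) (s2 j)) \<longlonglongrightarrow> L2" using Q_conv[OF k h2] by (auto simp: convergent_def)
    have "(\<lambda>j. (bil k (s1 j) (s1 j) - bil k (s2 j) (s2 j)) / 4) \<longlonglongrightarrow> (L1 - L2) / 4"
      by (auto intro!: tendsto_intros L1 L2)
    then show ?thesis by (auto simp: convergent_def)
  qed
  then have "convergent (\<lambda>j. bil k (a j) (b j))" unfolding eq .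
  then show ?thesis unfolding covar_def by (simp add: convergent_LIMSEQ_iff)
qed

lemma cv_lin_l:
  assumes k: "psdk k" and a: "a \<in> H0 k" and b: "b \<in> H0 k" and c: "c \<in> H0 k"
  shows "covar k (\<lambda>j x. a j x + r * b j x) c = covar k a c + r * covar k b c"
proof (rule LIMSEQ_unique[OF covar_lim[OF k H0_lin[OF k a b] c]])
  have "(\<lambda>j. bil k (a j) (c j) + r * bil k (b j) (c j)) \<longlonglongrightarrow> covar k a c + r * covar k b c"
    by (intro tendsto_intros covar_lim[OF k a c] covar_lim[OF k b c])
  moreover have "bil k (\<lambda>x. a j x + r * b j x) (c j) = bil k (a j) (c j) + r * bil k (b j) (c j)" for j
    by (rule bil_lin_l[OF H0_fin[OF a] H0_fin[OF b] H0_fin[OF c]])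
  ultimately show "(\<lambda>j. bil k (\<lambda>x. a j x + r * b j x) (c j)) \<longlonglongrightarrow> covar k a c + r * covar k b c" by simp
qed

lemma cv_sym:
  assumes k: "psdk k" and a: "a \<in> H0 k" and b: "b \<in> H0 k"
  shows "covar k a b = covar k b a"
proof -
  have "(\<lambda>j. bil k (a j) (b j)) = (\<lambda>j. bil k (b j) (a j))"
    using bil_sym[OF psdk_sym[OF k] H0_fin[OF a] H0_fin[OF b]] by auto
  then show ?thesis by (simp add: covar_def)
qed

lemma cv_pos:
  assumes k: "psdk k" and a: "a \<in> H0 k"
  shows "0 \<le> covar k a a"
  by (rule LIMSEQ_le_const[OF covar_lim[OF k a a]]) (use psdk_pos[OF k H0_fin[OF a]] in auto)

lemma cv_CS:
  assumes k: "psdk k" and a: "a \<in> H0 k" and b: "b \<in> H0 k"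
  shows "(covar k a b)\<^sup>2 \<le> covar k a a * covar k b b"
proof (rule LIMSEQ_le)
  show "(\<lambda>j. (bil k (a j) (b j))\<^sup>2) \<longlonglongrightarrow> (covar k a b)\<^sup>2" by (intro tendsto_intros covar_lim[OF k a b])
  show "(\<lambda>j. bil k (a j) (a j) * bil k (b j) (b j)) \<longlonglongrightarrow> covar k a a * covar k b b"
    by (intro tendsto_intros covar_lim[OF k a a] covar_lim[OF k b b])
  show "\<exists>N. \<forall>n\<ge>N. (bil k (a n) (b n))\<^sup>2 \<le> bil k (a n) (a n) * bil k (b n) (b n)"
    using bil_CS[OF k H0_fin[OF a] H0_fin[OF b]] by blast
qed

lemma cv_lin_r:
  assumes k: "psdk k" and a: "a \<in> H0 k" and b: "b \<in> H0 k" and c: "c \<in> H0 k"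
  shows "covar k c (\<lambda>j x. a j x + r * b j x) = covar k c a + r * covar k c b"
  using cv_lin_l[OF k a b c, of r] cv_sym[OF k c H0_lin[OF k a b]] cv_sym[OF k c a] cv_sym[OF k c b] by simp

lemma cv_diff_l:
  assumes k: "psdk k" and a: "a \<in> H0 k" and b: "b \<in> H0 k" and c: "c \<in> H0 k"
  shows "covar k (\<lambda>j x. a j x - b j x) c = covar k a c - covar k b c"
  using cv_lin_l[OF k a b c, of "-1"] by simp

lemma cv_diff_r:
  assumes k: "psdk k" and a: "a \<in> H0 k" and b: "b \<in> H0 k" and c: "c \<in> H0 k"
  shows "covar k c (\<lambda>j x. a j x - b j x) = covar k c a - covar k c b"
  using cv_lin_r[OF k a b c, of "-1"] by simp

lemma cv_zero: "covar k (\<lambda>j x. 0) c = 0"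
  by (simp add: covar_def bil_def fsupp_def)

lemma cv_sum_l:
  assumes k: "psdk k" and I: "finite I" and Y: "\<And>i. i \<in> I \<Longrightarrow> Y i \<in> H0 k" and c: "c \<in> H0 k"
  shows "covar k (\<lambda>j x. \<Sum>i\<in>I. \<beta> i * Y i j x) c = (\<Sum>i\<in>I. \<beta> i * covar k (Y i) c)"
  using I Y
proof (induction I rule: finite_induct)
  case empty then show ?case using cv_zero by simp
next
  case (insert i0 I)
  have h: "(\<lambda>j x. \<Sum>i\<in>I. \<beta> i * Y i j x) \<in> H0 k" by (rule H0_sum[OF k insert(1)]) (use insert in auto)
  have "(\<lambda>j x. \<Sum>i\<in>insert i0 I. \<beta> i * Y i j x) = (\<lambda>j x. (\<Sum>i\<in>I. \<beta> i * Y i j x) + \<beta> i0 * Y i0 j x)"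
    using insert(1,2) by (simp add: add.commute)
  then have "covar k (\<lambda>j x. \<Sum>i\<in>insert i0 I. \<beta> i * Y i j x) c
      = covar k (\<lambda>j x. \<Sum>i\<in>I. \<beta> i * Y i j x) c + \<beta> i0 * covar k (Y i0) c"
    using cv_lin_l[OF k h insert(4)[of i0] c, of "\<beta> i0"] by simp
  also have "\<dots> = (\<Sum>i\<in>I. \<beta> i * covar k (Y i) c) + \<beta> i0 * covar k (Y i0) c"
    using insert by simp
  finally show ?case using insert(1,2) by (simp add: add.commute)
qed

lemma cv_sum_r:
  assumes k: "psdk k" and I: "finite I" and Y: "\<And>i. i \<in> I \<Longrightarrow> Y i \<in> H0 k" and c: "c \<in> H0 k"
  shows "covar k c (\<lambda>j x. \<Sum>i\<in>I. \<beta> i * Y i j x) = (\<Sum>i\<in>I. \<beta> i * covar k c (Y i))"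
proof -
  have "covar k c (\<lambda>j x. \<Sum>i\<in>I. \<beta> i * Y i j x) = covar k (\<lambda>j x. \<Sum>i\<in>I. \<beta> i * Y i j x) c"
    by (rule cv_sym[OF k c H0_sum[OF k I Y]])
  also have "\<dots> = (\<Sum>i\<in>I. \<beta> i * covar k (Y i) c)" by (rule cv_sum_l[OF k I Y c])
  also have "\<dots> = (\<Sum>i\<in>I. \<beta> i * covar k c (Y i))"
    by (intro sum.cong refl) (simp add: cv_sym[OF k _ c] Y)
  finally show ?thesis .
qed

definition lc :: "(nat \<Rightarrow> nat \<Rightarrow> 'a \<Rightarrow> real) \<Rightarrow> nat \<Rightarrow> (nat \<Rightarrow> real) \<Rightarrow> nat \<Rightarrow> 'a \<Rightarrow> real" where
  "lc Y m \<beta> = (\<lambda>j x. \<Sum>l\<in>{1..m}. \<beta> l * Y l j x)"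

lemma lc_H0: "psdk k \<Longrightarrow> (\<forall>i\<in>{1..n}. Y i \<in> H0 k) \<Longrightarrow> m \<le> n \<Longrightarrow> lc Y m \<beta> \<in> H0 k"
  unfolding lc_def by (rule H0_sum) auto

lemma lc_Suc: "lc Y (Suc m) \<beta> = (\<lambda>j x. lc Y m \<beta> j x + \<beta> (Suc m) * Y (Suc m) j x)"
  by (simp add: lc_def sum.cl_ivl_Suc)

lemma lc_cong: "(\<And>i. i \<in> {1..m} \<Longrightarrow> \<beta> i = \<beta>' i) \<Longrightarrow> lc Y m \<beta> = lc Y m \<beta>'"
  unfolding lc_def by (intro ext sum.cong) auto

lemma lc_lin: "lc Y m (\<lambda>i. \<beta> i - t * \<gamma> i) = (\<lambda>j x. lc Y m \<beta> j x - t * lc Y m \<gamma> j x)"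
  unfolding lc_def by (intro ext) (simp add: sum_distrib_left sum_subtractf[symmetric] algebra_simps)

lemma cv_lc_r:
  assumes k: "psdk k" and Y: "\<forall>i\<in>{1..n}. Y i \<in> H0 k" and m: "m \<le> n" and c: "c \<in> H0 k"
  shows "covar k c (lc Y m \<gamma>) = (\<Sum>l\<in>{1..m}. \<gamma> l * covar k c (Y l))"
  unfolding lc_def by (rule cv_sum_r[OF k]) (use Y m c in auto)

lemma GS:
  assumes k: "psdk k" and Y: "\<forall>i\<in>{1..n}. Y i \<in> H0 k"
  shows "m \<le> n \<Longrightarrow> \<forall>a\<in>H0 k. \<exists>\<beta>. \<forall>i\<in>{1..m}. covar k (\<lambda>j x. lc Y m \<beta> j x - a j x) (Y i) = 0"
proof (induction m)
  case 0 then show ?case by simp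
next
  case (Suc m)
  have mn: "m \<le> n" using Suc by simp
  have YS: "Y (Suc m) \<in> H0 k" using Y Suc by auto
  have Yi: "Y i \<in> H0 k" if "i \<in> {1..m}" for i using Y that mn by auto
  have IH: "\<forall>a\<in>H0 k. \<exists>\<beta>. \<forall>i\<in>{1..m}. covar k (\<lambda>j x. lc Y m \<beta> j x - a j x) (Y i) = 0" using Suc mn by blast
  obtain \<gamma> where \<gamma>: "\<And>i. i \<in> {1..m} \<Longrightarrow> covar k (\<lambda>j x. lc Y m \<gamma> j x - Y (Suc m) j x) (Y i) = 0"
    using IH YS by blast
  have lcg: "lc Y m \<gamma> \<in> H0 k" by (rule lc_H0[OF k Y mn])
  define z where "z = (\<lambda>j x. Y (Suc m) j x - lc Y m \<gamma> j x)"
  have zH: "z \<in> H0 k" unfolding z_def by (rule H0_diff[OF k YS lcg])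
  have zo: "covar k z (Y i) = 0" if i: "i \<in> {1..m}" for i
    using \<gamma>[OF i] cv_diff_l[OF k lcg YS Yi[OF i]] cv_diff_l[OF k YS lcg Yi[OF i]] unfolding z_def by simp
  have zlc: "covar k z (lc Y m \<gamma>) = 0"
    using cv_lc_r[OF k Y mn zH, of \<gamma>] zo by simp
  have YSeq: "Y (Suc m) = (\<lambda>j x. z j x + 1 * lc Y m \<gamma> j x)" unfolding z_def by auto
  have cYS: "covar k c (Y (Suc m)) = covar k c z + covar k c (lc Y m \<gamma>)" if c: "c \<in> H0 k" for c
    using cv_lin_r[OF k zH lcg c, of 1] YSeq by simp
  show ?case
  proof
    fix a assume a: "a \<in> H0 k"
    obtain \<beta> where \<beta>: "\<And>i. i \<in> {1..m} \<Longrightarrow> covar k (\<lambda>j x. lc Y m \<beta> j x - a j x) (Y i) = 0"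
      using IH a by blast
    define w where "w = (\<lambda>j x. lc Y m \<beta> j x - a j x)"
    have wH: "w \<in> H0 k" unfolding w_def by (rule H0_diff[OF k lc_H0[OF k Y mn] a])
    have wo: "covar k w (Y i) = 0" if "i \<in> {1..m}" for i using \<beta>[OF that] by (simp add: w_def)
    have wlc: "covar k w (lc Y m \<gamma>) = 0" using cv_lc_r[OF k Y mn wH, of \<gamma>] wo by simp
    show "\<exists>\<beta>. \<forall>i\<in>{1..Suc m}. covar k (\<lambda>j x. lc Y (Suc m) \<beta> j x - a j x) (Y i) = 0"
    proof (cases "covar k z z = 0")
      case True
      have "(covar k w z)\<^sup>2 \<le> covar k w w * covar k z z" by (rule cv_CS[OF k wH zH])
      then have wz: "covar k w z = 0" using True by simp
      define \<beta>' where "\<beta>' = \<beta>(Suc m := 0)"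
      have "lc Y (Suc m) \<beta>' = (\<lambda>j x. lc Y m \<beta>' j x)" by (simp add: lc_Suc \<beta>'_def)
      also have "lc Y m \<beta>' = lc Y m \<beta>" by (rule lc_cong) (auto simp: \<beta>'_def)
      finally have e: "(\<lambda>j x. lc Y (Suc m) \<beta>' j x - a j x) = w" by (simp add: w_def)
      show ?thesis
      proof (intro exI[of _ \<beta>'] ballI)
        fix i assume i: "i \<in> {1..Suc m}"
        show "covar k (\<lambda>j x. lc Y (Suc m) \<beta>' j x - a j x) (Y i) = 0"
        proof (cases "i = Suc m")
          case True then show ?thesis unfolding e using cYS[OF wH] wz wlc by simp
        next
          case False then have "i \<in> {1..m}" using i by auto
          then show ?thesis unfolding e by (rule wo)
        qed
      qed
    next
      case False
      define t where "t = - covar k w z / covar k z z"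
      define \<beta>' where "\<beta>' = (\<lambda>i. if i = Suc m then t else \<beta> i - t * \<gamma> i)"
      have "lc Y m \<beta>' = lc Y m (\<lambda>i. \<beta> i - t * \<gamma> i)" by (rule lc_cong) (auto simp: \<beta>'_def)
      then have e: "(\<lambda>j x. lc Y (Suc m) \<beta>' j x - a j x) = (\<lambda>j x. w j x + t * z j x)"
        unfolding lc_Suc lc_lin by (auto simp: \<beta>'_def w_def z_def algebra_simps)
      have w'H: "(\<lambda>j x. w j x + t * z j x) \<in> H0 k" by (rule H0_lin[OF k wH zH])
      have wz': "covar k (\<lambda>j x. w j x + t * z j x) z = 0"
        using cv_lin_l[OF k wH zH zH, of t] False by (simp add: t_def)
      have wl': "covar k (\<lambda>j x. w j x + t * z j x) (lc Y m \<gamma>) = 0"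
        using cv_lin_l[OF k wH zH lcg, of t] wlc zlc by simp
      show ?thesis
      proof (intro exI[of _ \<beta>'] ballI)
        fix i assume i: "i \<in> {1..Suc m}"
        show "covar k (\<lambda>j x. lc Y (Suc m) \<beta>' j x - a j x) (Y i) = 0"
        proof (cases "i = Suc m")
          case True then show ?thesis unfolding e using cYS[OF w'H] wz' wl' by simp
        next
          case False then have i': "i \<in> {1..m}" using i by auto
          show ?thesis unfolding e using cv_lin_l[OF k wH zH Yi[OF i'], of t] wo[OF i'] zo[OF i'] by simp
        qed
      qed
    qed
  qed
qed

lemma comb_lc: "comb y n \<beta> = lc (y n) n \<beta>" by (simp add: comb_def lc_def)

lemma comb_H0: "psdk k \<Longrightarrow> \<forall>i\<in>{1..n}. y n i \<in> H0 k \<Longrightarrow> comb y n \<beta> \<in> H0 k"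
  unfolding comb_lc by (rule lc_H0) auto

lemma Hsp_H0: "h \<in> Hsp k \<Longrightarrow> snd h \<in> H0 k" by (auto simp: Hsp_def)

lemma blp_exists:
  assumes k: "psdk k" and Y: "\<forall>i\<in>{1..n}. y n i \<in> H0 k" and h: "h \<in> Hsp k"
  shows "\<exists>p. is_blp k y n h p"
proof -
  have a: "snd h \<in> H0 k" by (rule Hsp_H0[OF h])
  obtain \<beta> where \<beta>: "\<forall>i\<in>{1..n}. covar k (\<lambda>j x. lc (y n) n \<beta> j x - snd h j x) (y n i) = 0"
    using GS[OF k Y, of n] a by blast
  define d where "d = (\<lambda>j x. comb y n \<beta> j x - snd h j x)"
  have dH: "d \<in> H0 k" unfolding d_def by (rule H0_diff[OF k comb_H0[of k n y, OF k Y] a])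
  have dY: "\<forall>i\<in>{1..n}. covar k d (y n i) = 0" using \<beta> by (simp add: d_def comb_lc)
  show ?thesis
  proof (intro exI[of _ "(fst h, comb y n \<beta>)"])
    show "is_blp k y n h (fst h, comb y n \<beta>)"
      unfolding is_blp_def
    proof (intro conjI ballI)
      show "(fst h, comb y n \<beta>) \<in> Hn y n" by (auto simp: Hn_def)
      fix g assume "g \<in> Hn y n"
      then obtain c \<beta>' where g: "g = (c, comb y n \<beta>')" by (auto simp: Hn_def)
      have "covar k d (comb y n \<beta>') = (\<Sum>i\<in>{1..n}. \<beta>' i * covar k d (y n i))"
        unfolding comb_def by (rule cv_sum_r[OF k]) (use Y dH in auto)
      also have "\<dots> = 0" using dY by simp
      finally show "mom2 k (hdiff (fst h, comb y n \<beta>) h) g = 0"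
        by (simp add: mom2_def hdiff_def g d_def)
    qed
  qed
qed

lemma blp_min:
  assumes k: "psdk k" and Y: "\<forall>i\<in>{1..n}. y n i \<in> H0 k" and h: "h \<in> Hsp k"
    and p: "is_blp k y n h p" and q: "q \<in> Hn y n"
  shows "mom2 k (hdiff p h) (hdiff p h) \<le> mom2 k (hdiff q h) (hdiff q h)"
proof -
  have a: "snd h \<in> H0 k" by (rule Hsp_H0[OF h])
  obtain cp \<beta> where pe: "p = (cp, comb y n \<beta>)" using p by (auto simp: is_blp_def Hn_def)
  obtain cq \<beta>' where qe: "q = (cq, comb y n \<beta>')" using q by (auto simp: Hn_def)
  define ch where "ch = fst h"
  define d where "d = (\<lambda>j x. comb y n \<beta> j x - snd h j x)"
  define e where "e = comb y n (\<lambda>i. \<beta>' i - \<beta> i)"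
  have dH: "d \<in> H0 k" unfolding d_def by (rule H0_diff[OF k comb_H0[of k n y, OF k Y] a])
  have eH: "e \<in> H0 k" unfolding e_def by (rule comb_H0[of k n y, OF k Y])
  have "(cq - cp, e) \<in> Hn y n" by (auto simp: Hn_def e_def)
  then have "mom2 k (hdiff p h) (cq - cp, e) = 0" using p by (simp add: is_blp_def)
  then have orth: "(cp - ch) * (cq - cp) + covar k d e = 0"
    by (simp add: mom2_def hdiff_def pe ch_def d_def)
  have qd: "(\<lambda>j x. comb y n \<beta>' j x - snd h j x) = (\<lambda>j x. d j x + 1 * e j x)"
    unfolding d_def e_def comb_def by (auto simp: sum_subtractf algebra_simps)
  have "covar k (\<lambda>j x. d j x + 1 * e j x) (\<lambda>j x. d j x + 1 * e j x)
      = covar k d (\<lambda>j x. d j x + 1 * e j x) + covar k e (\<lambda>j x. d j x + 1 * e j x)"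
    using cv_lin_l[OF k dH eH H0_lin[OF k dH eH, of 1], of 1] by simp
  also have "\<dots> = covar k d d + 2 * covar k d e + covar k e e"
    using cv_lin_r[OF k dH eH dH, of 1] cv_lin_r[OF k dH eH eH, of 1] cv_sym[OF k dH eH] by simp
  finally have ex: "covar k (\<lambda>j x. d j x + 1 * e j x) (\<lambda>j x. d j x + 1 * e j x) = covar k d d + 2 * covar k d e + covar k e e" .
  have e0: "0 \<le> covar k e e" by (rule cv_pos[OF k eH])
  have m1: "mom2 k (hdiff q h) (hdiff q h) = (cq - ch)\<^sup>2 + (covar k d d + 2 * covar k d e + covar k e e)"
    unfolding ex[symmetric] qd[symmetric] by (simp add: mom2_def hdiff_def qe ch_def power2_eq_square)
  have m2: "mom2 k (hdiff p h) (hdiff p h) = (cp - ch)\<^sup>2 + covar k d d"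
    by (simp add: mom2_def hdiff_def pe ch_def d_def power2_eq_square)
  have sq: "(cq - ch)\<^sup>2 = (cp - ch)\<^sup>2 + 2 * ((cp - ch) * (cq - cp)) + (cq - cp)\<^sup>2"
    by (simp add: power2_eq_square algebra_simps)
  have s0: "0 \<le> (cq - cp)\<^sup>2" by simp
  show ?thesis unfolding m1 m2 using sq orth e0 s0 by linarith
qed

lemma H0_sub:
  assumes cmp: "\<forall>a. finite (fsupp a) \<longrightarrow> bil k2 a a \<le> M * bil k1 a a" and M: "M > 0"
  shows "H0 k1 \<subseteq> H0 k2"
proof
  fix a assume a: "a \<in> H0 k1"
  show "a \<in> H0 k2" unfolding H0_def
  proof (intro CollectI conjI allI impI)
    fix j show "finite (fsupp (a j))" by (rule H0_fin[OF a])
  next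
    fix e :: real assume e: "e > 0"
    obtain N where N: "\<And>i j. i \<ge> N \<Longrightarrow> j \<ge> N \<Longrightarrow> bil k1 (\<lambda>x. a i x - a j x) (\<lambda>x. a i x - a j x) < e / M"
      using H0_cauchy[OF a, of "e / M"] e M by auto
    show "\<exists>N. \<forall>i\<ge>N. \<forall>j\<ge>N. bil k2 (\<lambda>x. a i x - a j x) (\<lambda>x. a i x - a j x) < e"
    proof (intro exI[of _ N] allI impI)
      fix i j assume ij: "i \<ge> N" "j \<ge> N"
      have "bil k2 (\<lambda>x. a i x - a j x) (\<lambda>x. a i x - a j x) \<le> M * bil k1 (\<lambda>x. a i x - a j x) (\<lambda>x. a i x - a j x)"
        using cmp fs_diff[OF H0_fin[OF a] H0_fin[OF a]] by blast
      also have "\<dots> < M * (e / M)" using N[OF ij] M by (intro mult_strict_left_mono) auto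
      also have "\<dots> = e" using M by simp
      finally show "bil k2 (\<lambda>x. a i x - a j x) (\<lambda>x. a i x - a j x) < e" .
    qed
  qed
qed

lemma cv_cmp:
  assumes k1: "psdk k1" and k2: "psdk k2" and a1: "a \<in> H0 k1" and a2: "a \<in> H0 k2"
    and cmp: "\<forall>a. finite (fsupp a) \<longrightarrow> bil k2 a a \<le> M * bil k1 a a"
  shows "covar k2 a a \<le> M * covar k1 a a"
proof (rule LIMSEQ_le[OF covar_lim[OF k2 a2 a2]])
  show "(\<lambda>j. M * bil k1 (a j) (a j)) \<longlonglongrightarrow> M * covar k1 a a" by (intro tendsto_intros covar_lim[OF k1 a1 a1])
  show "\<exists>N. \<forall>n\<ge>N. bil k2 (a n) (a n) \<le> M * bil k1 (a n) (a n)" using cmp H0_fin[OF a1] by blast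
qed

lemma transfer:
  assumes k1: "psdk k1" and k2: "psdk k2" and Heq: "H0 k1 = H0 k2" and M: "M \<ge> 0"
    and cmp: "\<forall>a\<in>H0 k1. covar k2 a a \<le> M * covar k1 a a"
    and Y: "\<forall>n. \<forall>i\<in>{1..n}. y n i \<in> H0 k1" and h: "h \<in> Hsp k1"
    and cons: "blp_consistent k1 y h"
  shows "blp_consistent k2 y h"
  unfolding blp_consistent_def
proof (intro allI impI)
  fix q assume q: "\<forall>n. is_blp k2 y n h (q n)"
  have Y2: "\<forall>n. \<forall>i\<in>{1..n}. y n i \<in> H0 k2" using Y Heq by simp
  have h2: "h \<in> Hsp k2" using h Heq by (simp add: Hsp_def)
  have "\<forall>n. \<exists>p. is_blp k1 y n h p" using blp_exists[OF k1] Y h by blast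
  then obtain p where p: "\<And>n. is_blp k1 y n h (p n)" by metis
  have c1: "(\<lambda>n. mom2 k1 (hdiff (p n) h) (hdiff (p n) h)) \<longlonglongrightarrow> 0"
    using cons p unfolding blp_consistent_def by blast
  define C where "C = max 1 M"
  have sH: "snd (hdiff (p n) h) \<in> H0 k1" for n
  proof -
    obtain c \<beta> where "p n = (c, comb y n \<beta>)" using p[of n] by (auto simp: is_blp_def Hn_def)
    then show ?thesis
      using H0_diff[OF k1 comb_H0[of k1 n y, OF k1] Hsp_H0[OF h]] Y by (simp add: hdiff_def)
  qed
  have up: "mom2 k2 (hdiff (q n) h) (hdiff (q n) h) \<le> C * mom2 k1 (hdiff (p n) h) (hdiff (p n) h)" for n
  proof -
    have pn: "p n \<in> Hn y n" using p[of n] by (simp add: is_blp_def)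
    have "mom2 k2 (hdiff (q n) h) (hdiff (q n) h) \<le> mom2 k2 (hdiff (p n) h) (hdiff (p n) h)"
      by (rule blp_min[OF k2 _ h2 _ pn]) (use Y2 q in auto)
    also have "\<dots> \<le> C * mom2 k1 (hdiff (p n) h) (hdiff (p n) h)"
    proof -
      define g where "g = hdiff (p n) h"
      have gH: "snd g \<in> H0 k1" using sH by (simp add: g_def)
      have c2: "covar k2 (snd g) (snd g) \<le> M * covar k1 (snd g) (snd g)" using cmp gH by blast
      have c10: "0 \<le> covar k1 (snd g) (snd g)" by (rule cv_pos[OF k1 gH])
      have "M * covar k1 (snd g) (snd g) \<le> C * covar k1 (snd g) (snd g)"
        using c10 by (intro mult_right_mono) (auto simp: C_def)
      moreover have "fst g * fst g \<le> C * (fst g * fst g)"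
        using mult_right_mono[of 1 C "fst g * fst g"] by (simp add: C_def)
      ultimately show ?thesis using c2 unfolding g_def[symmetric] by (simp add: mom2_def algebra_simps)
    qed
    finally show ?thesis .
  qed
  have lo: "0 \<le> mom2 k2 (hdiff (q n) h) (hdiff (q n) h)" for n
  proof -
    have "q n \<in> Hn y n" using q by (simp add: is_blp_def)
    then obtain c \<beta> where "q n = (c, comb y n \<beta>)" by (auto simp: Hn_def)
    then have "snd (hdiff (q n) h) \<in> H0 k2"
      using H0_diff[OF k2 comb_H0[of k2 n y, OF k2] Hsp_H0[OF h2]] Y2 by (simp add: hdiff_def)
    from cv_pos[OF k2 this] show ?thesis by (simp add: mom2_def)
  qed
  have "(\<lambda>n. C * mom2 k1 (hdiff (p n) h) (hdiff (p n) h)) \<longlonglongrightarrow> C * 0" by (intro tendsto_intros c1)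
  then have L: "(\<lambda>n. C * mom2 k1 (hdiff (p n) h) (hdiff (p n) h)) \<longlonglongrightarrow> 0" by simp
  show "(\<lambda>n. mom2 k2 (hdiff (q n) h) (hdiff (q n) h)) \<longlonglongrightarrow> 0"
    by (rule tendsto_sandwich[OF always_eventually[OF allI[OF lo]] always_eventually[OF allI[OF up]] tendsto_const L])
qed

theorem lemma4p3:
  fixes \<nu> :: "'a::metric_space measure"
    and \<rho> \<rho>' :: "'a \<Rightarrow> 'a \<Rightarrow> real"
    and m m' :: "'a \<Rightarrow> real"
    and y :: "nat \<Rightarrow> nat \<Rightarrow> nat \<Rightarrow> 'a \<Rightarrow> real"
  assumes X: "compact (UNIV :: 'a set)" "connected (UNIV :: 'a set)" "infinite (UNIV :: 'a set)"
    and nu: "sets \<nu> = sets borel" "space \<nu> = UNIV" "finite_measure \<nu>"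
      "\<forall>U. open U \<and> U \<noteq> {} \<longrightarrow> emeasure \<nu> U > 0"
    and rho: "continuous_on UNIV (\<lambda>(x, z). \<rho> x z)" "strictly_pos_def_kernel \<rho>"
    and rho': "continuous_on UNIV (\<lambda>(x, z). \<rho>' x z)" "strictly_pos_def_kernel \<rho>'"
    and means: "is_L2 \<nu> m" "is_L2 \<nu> m'"
    and assmI: "cm_norm_equivalent \<nu> \<rho> \<rho>'"
  shows "((\<forall>n. \<forall>i\<in>{1..n}. y n i \<in> H0 \<rho>) \<longrightarrow>
            (\<forall>h\<in>Hsp \<rho>. blp_consistent \<rho> y h \<longleftrightarrow> blp_consistent \<rho>' y h))
         \<and> S_adm \<rho> = S_adm \<rho>'"
proof -
  have ms: "msetting \<nu>" unfolding msetting_def using nu(1,2,3) X(1) by blast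
  have k1: "kern \<nu> \<rho>" by (rule kern.intro[OF ms]) (unfold kern_axioms_def, use rho in blast)
  have k2: "kern \<nu> \<rho>'" by (rule kern.intro[OF ms]) (unfold kern_axioms_def, use rho' in blast)
  obtain c where c: "c > 0" and sp: "cm_space \<nu> \<rho> = cm_space \<nu> \<rho>'"
    and ce: "\<forall>u\<in>cm_space \<nu> \<rho>. ereal c * cm_norm \<nu> \<rho> u \<le> cm_norm \<nu> \<rho>' u \<and> cm_norm \<nu> \<rho>' u \<le> ereal (1 / c) * cm_norm \<nu> \<rho> u"
    using assmI unfolding cm_norm_equivalent_def by blast
  have hyp1: "\<forall>u\<in>cm_space \<nu> \<rho>. cm_norm \<nu> \<rho>' u \<le> ereal (1 / c) * cm_norm \<nu> \<rho> u" using ce by blast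
  have hyp2: "\<forall>u\<in>cm_space \<nu> \<rho>'. cm_norm \<nu> \<rho> u \<le> ereal (1 / c) * cm_norm \<nu> \<rho>' u"
  proof
    fix u assume "u \<in> cm_space \<nu> \<rho>'"
    then have u: "u \<in> cm_space \<nu> \<rho>" using sp by simp
    have "ereal (1 / c) * (ereal c * cm_norm \<nu> \<rho> u) \<le> ereal (1 / c) * cm_norm \<nu> \<rho>' u"
      by (rule ereal_mult_left_mono) (use ce u c in auto)
    moreover have "ereal (1 / c) * (ereal c * cm_norm \<nu> \<rho> u) = (ereal (1 / c) * ereal c) * cm_norm \<nu> \<rho> u"
      by (rule mult.assoc[symmetric])
    moreover have "ereal (1 / c) * ereal c = 1" using c by (simp add: one_ereal_def)
    ultimately show "cm_norm \<nu> \<rho> u \<le> ereal (1 / c) * cm_norm \<nu> \<rho>' u" by simp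
  qed
  define M where "M = (1 / c)\<^sup>2"
  have M: "M > 0" using c by (simp add: M_def)
  have b12: "\<forall>a. finite (fsupp a) \<longrightarrow> bil \<rho> a a \<le> M * bil \<rho>' a a"
    using bil_compare[OF k1 k2 _ hyp1 nu(4)] c by (simp add: M_def)
  have b21: "\<forall>a. finite (fsupp a) \<longrightarrow> bil \<rho>' a a \<le> M * bil \<rho> a a"
    using bil_compare[OF k2 k1 _ hyp2 nu(4)] c by (simp add: M_def)
  have p1: "psdk \<rho>" by (rule spd_psdk[OF rho(2)])
  have p2: "psdk \<rho>'" by (rule spd_psdk[OF rho'(2)])
  have Heq: "H0 \<rho> = H0 \<rho>'" using H0_sub[OF b12 M] H0_sub[OF b21 M] by blast
  have Hspeq: "Hsp \<rho> = Hsp \<rho>'" by (simp add: Hsp_def Heq)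
  have c12: "\<forall>a\<in>H0 \<rho>. covar \<rho>' a a \<le> M * covar \<rho> a a"
    using cv_cmp[OF p1 p2 _ _ b21] Heq by blast
  have c21: "\<forall>a\<in>H0 \<rho>'. covar \<rho> a a \<le> M * covar \<rho>' a a"
    using cv_cmp[OF p2 p1 _ _ b12] Heq by blast
  have P1: "(\<forall>h\<in>Hsp \<rho>. blp_consistent \<rho> y' h \<longleftrightarrow> blp_consistent \<rho>' y' h)"
    if Y: "\<forall>n. \<forall>i\<in>{1..n}. y' n i \<in> H0 \<rho>" for y'
  proof
    fix h assume h: "h \<in> Hsp \<rho>"
    have Y': "\<forall>n. \<forall>i\<in>{1..n}. y' n i \<in> H0 \<rho>'" using Y Heq by simp
    have h': "h \<in> Hsp \<rho>'" using h Hspeq by simp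
    show "blp_consistent \<rho> y' h \<longleftrightarrow> blp_consistent \<rho>' y' h"
      using transfer[OF p1 p2 Heq _ c12 Y h] transfer[OF p2 p1 Heq[symmetric] _ c21 Y' h'] M by auto
  qed
  have LI: "lin_indep_n \<rho> y' n \<longleftrightarrow> lin_indep_n \<rho>' y' n"
    if Y: "\<forall>n. \<forall>i\<in>{1..n}. y' n i \<in> H0 \<rho>" for y' n
  proof -
    have "covar \<rho> (comb y' n \<beta>) (comb y' n \<beta>) = 0 \<longleftrightarrow> covar \<rho>' (comb y' n \<beta>) (comb y' n \<beta>) = 0" for \<beta>
    proof -
      have a1: "comb y' n \<beta> \<in> H0 \<rho>" using comb_H0[of \<rho> n y', OF p1] Y by blast
      have a2: "comb y' n \<beta> \<in> H0 \<rho>'" using a1 Heq by simp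
      have "0 \<le> covar \<rho> (comb y' n \<beta>) (comb y' n \<beta>)" by (rule cv_pos[OF p1 a1])
      moreover have "0 \<le> covar \<rho>' (comb y' n \<beta>) (comb y' n \<beta>)" by (rule cv_pos[OF p2 a2])
      moreover have "covar \<rho>' (comb y' n \<beta>) (comb y' n \<beta>) \<le> M * covar \<rho> (comb y' n \<beta>) (comb y' n \<beta>)" using c12 a1 by blast
      moreover have "covar \<rho> (comb y' n \<beta>) (comb y' n \<beta>) \<le> M * covar \<rho>' (comb y' n \<beta>) (comb y' n \<beta>)" using c21 a2 by blast
      ultimately show ?thesis by (smt (verit) mult_eq_0_iff)
    qed
    then show ?thesis unfolding lin_indep_n_def by simp
  qed
  show ?thesis
  proof
    show "(\<forall>n. \<forall>i\<in>{1..n}. y n i \<in> H0 \<rho>) \<longrightarrow> (\<forall>h\<in>Hsp \<rho>. blp_consistent \<rho> y h \<longleftrightarrow> blp_consistent \<rho>' y h)"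
      using P1 by blast
    show "S_adm \<rho> = S_adm \<rho>'"
    proof (rule set_eqI)
      fix y'
      show "y' \<in> S_adm \<rho> \<longleftrightarrow> y' \<in> S_adm \<rho>'"
      proof (cases "\<forall>n. \<forall>i\<in>{1..n}. y' n i \<in> H0 \<rho>")
        case True
        have A: "(\<forall>n. \<forall>i\<in>{1..n}. y' n i \<in> H0 \<rho>) = (\<forall>n. \<forall>i\<in>{1..n}. y' n i \<in> H0 \<rho>')" by (simp add: Heq)
        have B: "(\<forall>n. lin_indep_n \<rho> y' n) = (\<forall>n. lin_indep_n \<rho>' y' n)" using LI[OF True] by simp
        have C: "(\<forall>h\<in>Hsp \<rho>. blp_consistent \<rho> y' h) = (\<forall>h\<in>Hsp \<rho>'. blp_consistent \<rho>' y' h)"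
          using P1[OF True] Hspeq by simp
        show ?thesis by (simp only: S_adm_def mem_Collect_eq A B C)
      next
        case False
        have "y' \<notin> S_adm \<rho>" using False by (simp add: S_adm_def)
        moreover have "y' \<notin> S_adm \<rho>'" using False Heq by (simp add: S_adm_def)
        ultimately show ?thesis by blast
      qed
    qed
  qed
qed

end
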